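(* Let $\sigma\in(\tfrac12,1)$. There is $\theta_0=\theta_0(\sigma)\in(0,1)$ such that for every $\theta\in(\theta_0,1)$ the following holds. If $u\in H^\sigma(\mathbb{R})\setminus\{0\}$ minimizes $\mathcal{W}$ over $H^\sigma(\mathbb{R})\setminus\{0\}$, then there exist constants $a,b>0$ such that $u$ is a weak solution of $\mathcal{P}_1u+au-b|u|^2u=0$. Consequently $Q_1=b^{1/2}u$ solves $\mathcal{P}_1Q_1+\omega^{2\sigma}Q_1-|Q_1|^2Q_1=0$ with $\omega=a^{1/(2\sigma)}$.
   Context: $\mathcal{P}_1$ is the Fourier multiplier with symbol $p_1(\xi)=|\xi+1|^{2\sigma}-1-2\sigma\xi$, $\mathcal{P}_1^{1/2}$ the multiplier with symbol $p_1^{1/2}$. Let $\alpha=1/\sqrt{\sigma(2\sigma-1)}$. For $u\in H^\sigma(\mathbb{R})\setminus\{0\}$ define $W_1(u)=\|u\|_{L^2}^{\frac{4\sigma-1}{\sigma}}\|\mathcal{P}_1^{1/2}u\|_{L^2}^{\frac1\sigma}/\|u\|_{L^4}^4$, $W_2(u)=\alpha\|u\|_{L^2}^3\|\mathcal{P}_1^{1/2}u\|_{L^2}/\|u\|_{L^4}^4$, $W_3(u)=W_1(u)^{1-\theta}W_2(u)^\theta$, and $\mathcal{W}(u)=W_1(u)+W_2(u)-W_3(u)$. *)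

theory Defs
  imports "HOL-Analysis.Analysis"
begin

definition sq_int :: "(real \<Rightarrow> complex) \<Rightarrow> bool" where
  "sq_int f \<longleftrightarrow> f \<in> borel_measurable lborel \<and> integrable lborel (\<lambda>x. (cmod (f x))^2)"

definition fourier :: "(real \<Rightarrow> complex) \<Rightarrow> real \<Rightarrow> complex" where
  "fourier f \<xi> = complex_of_real (1 / sqrt (2 * pi)) *
      (LINT x|lborel. f x * exp (- \<i> * complex_of_real (x * \<xi>)))"

text \<open>uh is (a representative of) the L2 Fourier transform (Plancherel extension) of u,
  characterised by Parseval's identity against all functions in L1 and L2.\<close>
definition is_FT :: "(real \<Rightarrow> complex) \<Rightarrow> (real \<Rightarrow> complex) \<Rightarrow> bool" where
  "is_FT u uh \<longleftrightarrow> sq_int u \<and> sq_int uh \<and>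
     (\<forall>\<phi>. integrable lborel \<phi> \<and> sq_int \<phi> \<longrightarrow>
        (LINT x|lborel. u x * cnj (\<phi> x)) = (LINT \<xi>|lborel. uh \<xi> * cnj (fourier \<phi> \<xi>)))"

definition FT :: "(real \<Rightarrow> complex) \<Rightarrow> real \<Rightarrow> complex" where
  "FT u = (SOME uh. is_FT u uh)"

definition Hs :: "real \<Rightarrow> (real \<Rightarrow> complex) \<Rightarrow> bool" where
  "Hs \<sigma> u \<longleftrightarrow> (\<exists>uh. is_FT u uh \<and>
      integrable lborel (\<lambda>\<xi>. (1 + \<xi>^2) powr \<sigma> * (cmod (uh \<xi>))^2))"

definition p1 :: "real \<Rightarrow> real \<Rightarrow> real" where
  "p1 \<sigma> \<xi> = \<bar>\<xi> + 1\<bar> powr (2 * \<sigma>) - 1 - 2 * \<sigma> * \<xi>"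

definition L2norm :: "(real \<Rightarrow> complex) \<Rightarrow> real" where
  "L2norm u = sqrt (LINT x|lborel. (cmod (u x))^2)"

definition L4pow4 :: "(real \<Rightarrow> complex) \<Rightarrow> real" where
  "L4pow4 u = (LINT x|lborel. (cmod (u x))^4)"

text \<open>The L2 norm of P1^(1/2) u, computed on the Fourier side.\<close>
definition P1half_norm :: "real \<Rightarrow> (real \<Rightarrow> complex) \<Rightarrow> real" where
  "P1half_norm \<sigma> u = sqrt (LINT \<xi>|lborel. p1 \<sigma> \<xi> * (cmod (FT u \<xi>))^2)"

definition alpha :: "real \<Rightarrow> real" where
  "alpha \<sigma> = 1 / sqrt (\<sigma> * (2 * \<sigma> - 1))"

definition W1 :: "real \<Rightarrow> (real \<Rightarrow> complex) \<Rightarrow> real" where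
  "W1 \<sigma> u = L2norm u powr ((4 * \<sigma> - 1) / \<sigma>) * P1half_norm \<sigma> u powr (1 / \<sigma>) / L4pow4 u"

definition W2 :: "real \<Rightarrow> (real \<Rightarrow> complex) \<Rightarrow> real" where
  "W2 \<sigma> u = alpha \<sigma> * L2norm u ^ 3 * P1half_norm \<sigma> u / L4pow4 u"

definition W3 :: "real \<Rightarrow> real \<Rightarrow> (real \<Rightarrow> complex) \<Rightarrow> real" where
  "W3 \<sigma> \<theta> u = W1 \<sigma> u powr (1 - \<theta>) * W2 \<sigma> u powr \<theta>"

definition Wfun :: "real \<Rightarrow> real \<Rightarrow> (real \<Rightarrow> complex) \<Rightarrow> real" where
  "Wfun \<sigma> \<theta> u = W1 \<sigma> u + W2 \<sigma> u - W3 \<sigma> \<theta> u"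

text \<open>u in H^sigma is a weak solution of P1 u + a u - b |u|^2 u = 0
  (tested against all of H^sigma, pairing via the L2 inner product).\<close>
definition weak_sol :: "real \<Rightarrow> real \<Rightarrow> real \<Rightarrow> (real \<Rightarrow> complex) \<Rightarrow> bool" where
  "weak_sol \<sigma> a b u \<longleftrightarrow> Hs \<sigma> u \<and>
     (\<forall>\<phi>. Hs \<sigma> \<phi> \<longrightarrow>
        (LINT \<xi>|lborel. complex_of_real (p1 \<sigma> \<xi>) * FT u \<xi> * cnj (FT \<phi> \<xi>))
        + complex_of_real a * (LINT x|lborel. u x * cnj (\<phi> x))
        - complex_of_real b * (LINT x|lborel. complex_of_real ((cmod (u x))^2) * u x * cnj (\<phi> x))
        = 0)"

end

theory Submission
  imports Defs "HOL-Probability.Probability"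
begin


lemma int_powr_tail:
  fixes e :: real assumes "e < -1"
  shows "integrable lborel (\<lambda>x. indicator {1..} x * x powr e)"
proof -
  have "((\<lambda>x. x powr e) has_integral -(1 powr (e+1)) / (e+1)) {1..}"
    by (rule has_integral_powr_to_inf) (use assms in auto)
  hence "(\<lambda>x. x powr e) integrable_on {1..}" by blast
  hence "(\<lambda>x. x powr e) absolutely_integrable_on {1..}"
    by (rule nonnegative_absolutely_integrable_1) auto
  hence "integrable lebesgue (\<lambda>x. indicator {1..} x *\<^sub>R x powr e)"
    by (simp add: set_integrable_def)
  hence "integrable lborel (\<lambda>x. indicator {1..} x *\<^sub>R x powr e)"
    by (subst (asm) integrable_completion) auto
  thus ?thesis by simp
qed

lemma int_weight:
  fixes r :: real assumes "1/2 < r"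
  shows "integrable lborel (\<lambda>x. (1 + x^2) powr (-r))"
proof -
  have e: "-2*r < -1" using assms by simp
  have i1: "integrable lborel (\<lambda>x. indicator {1..} x * x powr (-2*r))"
    by (rule int_powr_tail[OF e])
  have i2: "integrable lborel (\<lambda>x. indicator {1..} (-x) * (-x) powr (-2*r))"
    using lborel_integrable_real_affine[OF i1, of "-1" 0] by simp
  have i0: "integrable lborel (\<lambda>x::real. indicator {-1..1} x :: real)"
    by (auto simp: integrable_indicator_iff)
  have ig: "integrable lborel (\<lambda>x. indicator {-1..1} x + indicator {1..} x * x powr (-2*r)
        + indicator {1..} (-x) * (-x) powr (-2*r))"
    using i0 i1 i2 by (intro Bochner_Integration.integrable_add) auto
  show ?thesis
  proof (rule Bochner_Integration.integrable_bound[OF ig])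
    show "(\<lambda>x. (1 + x\<^sup>2) powr - r) \<in> borel_measurable lborel" by measurable
    show "AE x in lborel. norm ((1 + x\<^sup>2) powr - r) \<le> norm (indicator {-1..1} x + indicator {1..} x * x powr (-2*r)
        + indicator {1..} (-x) * (-x) powr (-2*r))"
    proof (intro AE_I2)
      fix x :: real
      have "1 \<le> (1 + x\<^sup>2) powr r" by (rule ge_one_powr_ge_zero) (use assms in auto)
      hence pos: "(1 + x\<^sup>2) powr - r \<le> 1"
        by (simp add: powr_minus_divide divide_le_eq)
      have key: "(1 + x\<^sup>2) powr - r \<le> \<bar>x\<bar> powr (-2*r)" if "\<bar>x\<bar> \<ge> 1"
      proof -
        have "\<bar>x\<bar> powr (-2*r) = (x^2) powr (-r)"
        proof -
          have "x^2 = \<bar>x\<bar> powr 2" using that powr_realpow[of "\<bar>x\<bar>" 2] by simp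
          hence "(x^2) powr (-r) = (\<bar>x\<bar> powr 2) powr (-r)" by (rule arg_cong)
          also have "\<dots> = \<bar>x\<bar> powr (2 * (-r))" by (rule powr_powr)
          finally show ?thesis by simp
        qed
        also have "(1 + x\<^sup>2) powr - r \<le> (x^2) powr (-r)"
          using that assms by (intro powr_mono2') auto
        finally show ?thesis by simp
      qed
      show "norm ((1 + x\<^sup>2) powr - r) \<le> norm (indicator {-1..1} x + indicator {1..} x * x powr (-2*r)
        + indicator {1..} (-x) * (-x) powr (-2*r))"
        using key pos by (cases "x \<ge> 1"; cases "x \<le> -1") (auto simp: indicator_def)
    qed
  qed
qed


lemma cmod_mult_cnj_le: "cmod (a * cnj b) \<le> ((cmod a)^2 + (cmod b)^2) / 2"
proof -
  have "2 * (cmod a * cmod b) \<le> (cmod a)^2 + (cmod b)^2"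
    using sum_squares_bound[of "cmod a" "cmod b"] by (simp add: algebra_simps power2_eq_square)
  thus ?thesis by (simp add: norm_mult)
qed

lemma borel_measurable_cnj[measurable]:
  "f \<in> borel_measurable M \<Longrightarrow> (\<lambda>x. cnj (f x :: complex)) \<in> borel_measurable M"
  by (rule borel_measurable_continuous_on[where f=cnj]) (auto intro!: continuous_intros)

lemma sq_int_meas: "sq_int f \<Longrightarrow> f \<in> borel_measurable lborel" by (simp add: sq_int_def)

lemma sq_int_prod:
  assumes "sq_int f" "sq_int g"
  shows "integrable lborel (\<lambda>x. f x * cnj (g x))"
proof (rule Bochner_Integration.integrable_bound)
  note [measurable] = sq_int_meas[OF assms(1)] sq_int_meas[OF assms(2)]
  show "integrable lborel (\<lambda>x. ((cmod (f x))^2 + (cmod (g x))^2) / 2)"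
    using assms unfolding sq_int_def by (intro integrable_divide Bochner_Integration.integrable_add) auto
  show "(\<lambda>x. f x * cnj (g x)) \<in> borel_measurable lborel" by measurable
  show "AE x in lborel. norm (f x * cnj (g x)) \<le> norm (((cmod (f x))^2 + (cmod (g x))^2) / 2)"
    using cmod_mult_cnj_le by (auto intro!: AE_I2 order.trans[OF cmod_mult_cnj_le])
qed

lemma sq_int_lin:
  assumes "sq_int f" "sq_int g"
  shows "sq_int (\<lambda>x. f x + c * g x)"
  unfolding sq_int_def
proof
  note [measurable] = sq_int_meas[OF assms(1)] sq_int_meas[OF assms(2)]
  show "(\<lambda>x. f x + c * g x) \<in> borel_measurable lborel" by measurable
  show "integrable lborel (\<lambda>x. (cmod (f x + c * g x))^2)"
  proof (rule Bochner_Integration.integrable_bound)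
    show "integrable lborel (\<lambda>x. 2 * (cmod (f x))^2 + 2 * (cmod c)^2 * (cmod (g x))^2)"
      using assms unfolding sq_int_def by (intro Bochner_Integration.integrable_add integrable_mult_right) auto
    show "(\<lambda>x. (cmod (f x + c * g x))^2) \<in> borel_measurable lborel" by measurable
    show "AE x in lborel. norm ((cmod (f x + c * g x))^2) \<le> norm (2 * (cmod (f x))^2 + 2 * (cmod c)^2 * (cmod (g x))^2)"
    proof (intro AE_I2)
      fix x
      have "cmod (f x + c * g x) \<le> cmod (f x) + cmod c * cmod (g x)"
        using norm_triangle_ineq[of "f x" "c * g x"] by (simp add: norm_mult)
      hence "(cmod (f x + c * g x))^2 \<le> (cmod (f x) + cmod c * cmod (g x))^2"
        by (intro power_mono) auto
      also have "\<dots> \<le> 2 * (cmod (f x))^2 + 2 * (cmod c)^2 * (cmod (g x))^2"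
        using sum_squares_bound[of "cmod (f x)" "cmod c * cmod (g x)"]
        by (simp add: power2_eq_square algebra_simps)
      finally show "norm ((cmod (f x + c * g x))^2) \<le> norm (2 * (cmod (f x))^2 + 2 * (cmod c)^2 * (cmod (g x))^2)"
        by simp
    qed
  qed
qed

lemma integrable_prod_lborel:
  fixes f g :: "real \<Rightarrow> complex"
  assumes f: "integrable lborel f" and g: "integrable lborel g"
  shows "integrable (lborel \<Otimes>\<^sub>M lborel) (\<lambda>(x,y). f x * g y)"
proof -
  have [measurable]: "f \<in> borel_measurable lborel" "g \<in> borel_measurable lborel"
    using f g by auto
  have "(\<integral>\<^sup>+ p. ennreal (norm ((\<lambda>(x,y). f x * g y) p)) \<partial>(lborel \<Otimes>\<^sub>M lborel))
      = (\<integral>\<^sup>+ x. \<integral>\<^sup>+ y. ennreal (norm (f x)) * ennreal (norm (g y)) \<partial>lborel \<partial>lborel)"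
    by (subst lborel.nn_integral_fst[symmetric]) (auto simp: norm_mult ennreal_mult)
  also have "\<dots> = (\<integral>\<^sup>+ x. ennreal (norm (f x)) \<partial>lborel) * (\<integral>\<^sup>+ y. ennreal (norm (g y)) \<partial>lborel)"
    by (simp add: nn_integral_cmult nn_integral_multc)
  also have "\<dots> < \<infinity>"
    using f g unfolding integrable_iff_bounded by (simp add: ennreal_mult_less_top)
  finally show ?thesis unfolding integrable_iff_bounded by auto
qed

lemma fourier_meas:
  assumes "integrable lborel \<psi>"
  shows "fourier \<psi> \<in> borel_measurable lborel"
proof -
  have [measurable]: "\<psi> \<in> borel_measurable lborel" using assms by auto
  show ?thesis unfolding fourier_def[abs_def] by measurable
qed

lemma fourier_bound:
  assumes "integrable lborel \<psi>"
  shows "cmod (fourier \<psi> \<xi>) \<le> (LINT x|lborel. cmod (\<psi> x))"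
proof -
  have "cmod (fourier \<psi> \<xi>) = \<bar>1 / sqrt (2 * pi)\<bar> * cmod (LINT x|lborel. \<psi> x * exp (- \<i> * complex_of_real (x * \<xi>)))"
    unfolding fourier_def by (simp add: norm_mult norm_divide)
  also have "\<dots> \<le> 1 * cmod (LINT x|lborel. \<psi> x * exp (- \<i> * complex_of_real (x * \<xi>)))"
  proof (intro mult_right_mono)
    have "1 \<le> sqrt (2*pi)" using pi_gt3 by (simp add: real_le_rsqrt)
    thus "\<bar>1 / sqrt (2 * pi)\<bar> \<le> 1" by simp
  qed auto
  also have "\<dots> \<le> (LINT x|lborel. cmod (\<psi> x * exp (- \<i> * complex_of_real (x * \<xi>))))"
    by (simp add: integral_norm_bound)
  also have "\<dots> = (LINT x|lborel. cmod (\<psi> x))"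
    by (simp add: norm_mult)
  finally show ?thesis .
qed



lemma gauss_int: "integrable lborel (\<lambda>x::real. complex_of_real (exp (-((x - b)^2)/2)))"
proof -
  have "integrable lborel (\<lambda>x. sqrt (2*pi) * normal_density b 1 x)" by auto
  moreover have "\<And>x. sqrt (2*pi) * normal_density b 1 x = exp (-((x - b)^2)/2)"
    by (simp add: normal_density_def)
  ultimately have "integrable lborel (\<lambda>x::real. exp (-((x - b)^2)/2))" by simp
  thus ?thesis by (rule integrable_of_real)
qed

lemma gauss_sq_int: "sq_int (\<lambda>x::real. complex_of_real (exp (-((x - b)^2)/2)))"
  unfolding sq_int_def
proof
  show "(\<lambda>x::real. complex_of_real (exp (-((x - b)^2)/2))) \<in> borel_measurable lborel" by measurable
  have "integrable lborel (\<lambda>x::real. exp (-((x - b)^2)/2))"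
    using integrable_Re[OF gauss_int[of b]] by simp
  show "integrable lborel (\<lambda>x. (cmod (complex_of_real (exp (-((x - b)^2)/2))))^2)"
  proof (rule Bochner_Integration.integrable_bound[OF \<open>integrable lborel (\<lambda>x::real. exp (-((x - b)^2)/2))\<close>])
    show "AE x in lborel. norm ((cmod (complex_of_real (exp (- (x - b)\<^sup>2 / 2))))\<^sup>2) \<le> norm (exp (- (x - b)\<^sup>2 / 2))"
    proof (intro AE_I2)
      fix x :: real
      have "exp (- (x - b)\<^sup>2 / 2) \<le> 1" by simp
      hence "(exp (- (x - b)\<^sup>2 / 2))^2 \<le> exp (- (x - b)\<^sup>2 / 2)"
        by (simp add: power2_eq_square mult_le_cancel_right1)
      thus "norm ((cmod (complex_of_real (exp (- (x - b)\<^sup>2 / 2))))\<^sup>2) \<le> norm (exp (- (x - b)\<^sup>2 / 2))"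
        by simp
    qed
  qed measurable
qed

lemma fourier_gauss:
  "fourier (\<lambda>x. complex_of_real (exp (-((x - b)^2)/2))) \<xi>
     = exp (- \<i> * complex_of_real (b * \<xi>)) * complex_of_real (exp (-(\<xi>^2)/2))"
proof -
  have "(LINT x|lborel. complex_of_real (exp (-((x - b)^2)/2)) * exp (- \<i> * complex_of_real (x * \<xi>)))
     = (LINT y|lborel. complex_of_real (exp (-((b + 1*y - b)^2)/2)) * exp (- \<i> * complex_of_real ((b + 1*y) * \<xi>)))"
    using lborel_integral_real_affine[of 1 "\<lambda>x. complex_of_real (exp (-((x - b)^2)/2)) * exp (- \<i> * complex_of_real (x * \<xi>))" b]
    by simp
  also have "\<dots> = (LINT y|lborel. exp (- \<i> * complex_of_real (b * \<xi>)) * (complex_of_real (exp (-(y^2)/2)) * exp (- \<i> * complex_of_real (y * \<xi>))))"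
    by (intro Bochner_Integration.integral_cong refl) (simp add: algebra_simps exp_add[symmetric])
  also have "\<dots> = exp (- \<i> * complex_of_real (b * \<xi>)) * (LINT y|lborel. complex_of_real (exp (-(y^2)/2)) * exp (- \<i> * complex_of_real (y * \<xi>)))"
    by simp
  finally have 1: "(LINT x|lborel. complex_of_real (exp (-((x - b)^2)/2)) * exp (- \<i> * complex_of_real (x * \<xi>)))
     = exp (- \<i> * complex_of_real (b * \<xi>)) * (LINT y|lborel. complex_of_real (exp (-(y^2)/2)) * exp (- \<i> * complex_of_real (y * \<xi>)))" .
  have "complex_of_real (exp (-((-\<xi>)^2)/2)) = char std_normal_distribution (-\<xi>)"
    by (simp add: char_std_normal_distribution)
  also have "\<dots> = (LINT y|lborel. std_normal_density y *\<^sub>R iexp ((-\<xi>) * y))"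
    unfolding char_def by (subst integral_density) auto
  also have "\<dots> = (LINT y|lborel. complex_of_real (1 / sqrt (2*pi)) * (complex_of_real (exp (-(y^2)/2)) * exp (- \<i> * complex_of_real (y * \<xi>))))"
    by (intro Bochner_Integration.integral_cong refl) (simp add: std_normal_density_def scaleR_conv_of_real mult_ac)
  also have "\<dots> = complex_of_real (1 / sqrt (2*pi)) * (LINT y|lborel. complex_of_real (exp (-(y^2)/2)) * exp (- \<i> * complex_of_real (y * \<xi>)))"
    by simp
  finally have 2: "complex_of_real (1 / sqrt (2*pi)) * (LINT y|lborel. complex_of_real (exp (-(y^2)/2)) * exp (- \<i> * complex_of_real (y * \<xi>))) = complex_of_real (exp (-(\<xi>^2)/2))"
    by simp
  have "fourier (\<lambda>x. complex_of_real (exp (-((x - b)^2)/2))) \<xi> = exp (- \<i> * complex_of_real (b * \<xi>)) *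
     (complex_of_real (1 / sqrt (2*pi)) * (LINT y|lborel. complex_of_real (exp (-(y^2)/2)) * exp (- \<i> * complex_of_real (y * \<xi>))))"
    unfolding fourier_def 1 by (simp only: mult_ac)
  thus ?thesis unfolding 2 .
qed



lemma FU_real:
  fixes f :: "real \<Rightarrow> real"
  assumes f: "integrable lborel f"
    and z: "\<And>t. (LINT x|lborel. complex_of_real (f x) * iexp (t * x)) = 0"
  shows "AE x in lborel. f x = 0"
proof -
  have [measurable]: "f \<in> borel_measurable lborel" using f by auto
  define fp where "fp x = max (f x) 0" for x
  define fm where "fm x = max (- f x) 0" for x
  have [measurable]: "fp \<in> borel_measurable lborel" "fm \<in> borel_measurable lborel"
    unfolding fp_def[abs_def] fm_def[abs_def] by measurable
  have ip: "integrable lborel fp"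
    by (rule Bochner_Integration.integrable_bound[OF integrable_norm[OF f]]) (auto simp: fp_def)
  have im: "integrable lborel fm"
    by (rule Bochner_Integration.integrable_bound[OF integrable_norm[OF f]]) (auto simp: fm_def)
  have fpm: "f x = fp x - fm x" for x by (simp add: fp_def fm_def)
  have fp0: "fp x \<ge> 0" "fm x \<ge> 0" for x by (auto simp: fp_def fm_def)
  have icx: "integrable lborel (\<lambda>x. complex_of_real (g x) * iexp (t * x))" if "integrable lborel g" for g t
  proof -
    have [measurable]: "g \<in> borel_measurable lborel" using that by auto
    show ?thesis
      by (rule Bochner_Integration.integrable_bound[OF integrable_norm[OF that(1)]]) (auto simp: norm_mult)
  qed
  have eqc: "(LINT x|lborel. complex_of_real (fp x) * iexp (t * x)) = (LINT x|lborel. complex_of_real (fm x) * iexp (t * x))" for t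
  proof -
    have "(LINT x|lborel. complex_of_real (fp x) * iexp (t * x)) - (LINT x|lborel. complex_of_real (fm x) * iexp (t * x))
      = (LINT x|lborel. complex_of_real (fp x) * iexp (t * x) - complex_of_real (fm x) * iexp (t * x))"
      using icx[OF ip] icx[OF im] by simp
    also have "\<dots> = (LINT x|lborel. complex_of_real (f x) * iexp (t * x))"
      by (intro Bochner_Integration.integral_cong) (auto simp: fpm algebra_simps)
    finally show ?thesis using z[of t] by simp
  qed
  have "complex_of_real (LINT x|lborel. fp x) = complex_of_real (LINT x|lborel. fm x)"
    using eqc[of 0] by simp
  hence meq: "(LINT x|lborel. fp x) = (LINT x|lborel. fm x)" by simp
  define m where "m = (LINT x|lborel. fp x)"
  have m0: "m \<ge> 0" unfolding m_def using fp0 by (simp add: integral_nonneg_AE)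
  have "AE x in lborel. fp x = fm x"
  proof (cases "m = 0")
    case True
    have "AE x in lborel. fp x = 0"
      using True ip fp0 unfolding m_def by (subst (asm) integral_nonneg_eq_0_iff_AE) auto
    moreover have "(LINT x|lborel. fm x) = 0" using True meq unfolding m_def by simp
    hence "AE x in lborel. fm x = 0"
      using im fp0 by (subst (asm) integral_nonneg_eq_0_iff_AE) auto
    ultimately show ?thesis by auto
  next
    case False
    hence mpos: "m > 0" using m0 by simp
    define M1 where "M1 = density lborel (\<lambda>x. ennreal (fp x / m))"
    define M2 where "M2 = density lborel (\<lambda>x. ennreal (fm x / m))"
    have rd: "real_distribution (density lborel (\<lambda>x. ennreal (g x / m)))"
      if g: "integrable lborel g" "\<And>x. g x \<ge> 0" "(LINT x|lborel. g x) = m" for g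
    proof -
      have [measurable]: "g \<in> borel_measurable lborel" using g by auto
      have "emeasure (density lborel (\<lambda>x. ennreal (g x / m))) UNIV = (\<integral>\<^sup>+x. ennreal (g x / m) \<partial>lborel)"
        by (simp add: emeasure_density)
      also have "\<dots> = ennreal (LINT x|lborel. g x / m)"
        using g by (intro nn_integral_eq_integral) (auto simp: mpos less_imp_le)
      also have "\<dots> = 1" using g mpos by simp
      finally have "prob_space (density lborel (\<lambda>x. ennreal (g x / m)))"
        by (intro prob_spaceI) simp
      thus ?thesis unfolding real_distribution_def real_distribution_axioms_def by simp
    qed
    have r1: "real_distribution M1" unfolding M1_def by (rule rd[OF ip fp0(1)]) (simp add: m_def)
    have r2: "real_distribution M2" unfolding M2_def by (rule rd[OF im fp0(2)]) (simp add: m_def meq)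
    have ch: "char (density lborel (\<lambda>x. ennreal (g x / m))) t = (LINT x|lborel. complex_of_real (g x) * iexp (t * x)) / m"
      if g: "integrable lborel g" "\<And>x. g x \<ge> 0" for g t
    proof -
      have [measurable]: "g \<in> borel_measurable lborel" using g by auto
      have "char (density lborel (\<lambda>x. ennreal (g x / m))) t = (LINT x|lborel. (g x / m) *\<^sub>R iexp (t * x))"
        unfolding char_def by (subst integral_density) (auto simp: g mpos less_imp_le)
      also have "\<dots> = (LINT x|lborel. complex_of_real (g x) * iexp (t * x) / m)"
        by (intro Bochner_Integration.integral_cong) (auto simp: scaleR_conv_of_real)
      also have "\<dots> = (LINT x|lborel. complex_of_real (g x) * iexp (t * x)) / m" by simp
      finally show ?thesis .
    qed
    have "char M1 = char M2"
      unfolding M1_def M2_def using ch[OF ip fp0(1)] ch[OF im fp0(2)] eqc by auto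
    hence "M1 = M2" by (rule Levy_uniqueness[OF r1 r2])
    hence "AE x in lborel. ennreal (fp x / m) = ennreal (fm x / m)"
      unfolding M1_def M2_def by (subst (asm) sigma_finite_measure.density_unique_iff[OF sigma_finite_lborel]) auto
    thus ?thesis
      by eventually_elim (use mpos fp0 in \<open>auto simp: divide_right_mono\<close>)
  qed
  thus ?thesis
    by eventually_elim (auto simp: fp_def fm_def split: if_splits)
qed



lemma cnj_exp_mi: "cnj (exp (- (\<i> * z))) = exp (\<i> * cnj z)"
  by (simp add: exp_cnj)

lemma re_cnj: "complex_of_real (Re z) = (z + cnj z) / 2"
  by (simp add: complex_add_cnj)
lemma im_cnj: "complex_of_real (Im z) = (z - cnj z) / (2 * \<i>)"
  by (simp add: complex_eq_iff)

lemma FU_cplx: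
  fixes f :: "real \<Rightarrow> complex"
  assumes f: "integrable lborel f"
    and z: "\<And>t. (LINT x|lborel. f x * iexp (t * x)) = 0"
  shows "AE x in lborel. f x = 0"
proof -
  have [measurable]: "f \<in> borel_measurable lborel" using f by auto
  have i1: "integrable lborel (\<lambda>x. f x * iexp (t * x))" for t
    by (rule Bochner_Integration.integrable_bound[OF integrable_norm[OF f]]) (auto simp: norm_mult)
  have i2: "integrable lborel (\<lambda>x. cnj (f x * iexp (-t * x)))" for t
    by (rule Bochner_Integration.integrable_bound[OF integrable_norm[OF f]]) (auto simp: norm_mult)
  have cj: "cnj (f x * iexp (-t * x)) = cnj (f x) * iexp (t * x)" for x t
    by (simp add: cnj_exp_mi)
  have zc: "(LINT x|lborel. cnj (f x * iexp (-t * x))) = 0" for t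
    using Bochner_Integration.integral_cnj[of lborel "\<lambda>x. f x * iexp (- t * x)"] z[of "-t"] by (metis complex_cnj_zero)
  have "AE x in lborel. Re (f x) = 0"
  proof (rule FU_real)
    show "integrable lborel (\<lambda>x. Re (f x))" using f by (rule integrable_Re)
    fix t
    have "(LINT x|lborel. complex_of_real (Re (f x)) * iexp (t * x))
        = (LINT x|lborel. (f x * iexp (t * x) + cnj (f x * iexp (-t * x))) / 2)"
      by (intro Bochner_Integration.integral_cong refl) (simp add: re_cnj cnj_exp_mi field_simps)
    also have "\<dots> = ((LINT x|lborel. f x * iexp (t * x)) + (LINT x|lborel. cnj (f x * iexp (-t * x)))) / 2"
      using i1[of t] i2[of t] by simp
    also have "\<dots> = 0" using z[of t] zc[of t] by simp
    finally show "(LINT x|lborel. complex_of_real (Re (f x)) * iexp (t * x)) = 0" .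
  qed
  moreover have "AE x in lborel. Im (f x) = 0"
  proof (rule FU_real)
    show "integrable lborel (\<lambda>x. Im (f x))" using f by (rule integrable_Im)
    fix t
    have "(LINT x|lborel. complex_of_real (Im (f x)) * iexp (t * x))
        = (LINT x|lborel. (f x * iexp (t * x) - cnj (f x * iexp (-t * x))) / (2 * \<i>))"
      by (intro Bochner_Integration.integral_cong refl) (simp add: im_cnj cnj_exp_mi field_simps)
    also have "\<dots> = ((LINT x|lborel. f x * iexp (t * x)) - (LINT x|lborel. cnj (f x * iexp (-t * x)))) / (2 * \<i>)"
      using i1[of t] i2[of t] by simp
    also have "\<dots> = 0" using z[of t] zc[of t] by simp
    finally show "(LINT x|lborel. complex_of_real (Im (f x)) * iexp (t * x)) = 0" .
  qed
  ultimately show ?thesis by eventually_elim (simp add: complex_eq_iff)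
qed

definition gauss :: "real \<Rightarrow> real \<Rightarrow> complex" where
  "gauss b x = complex_of_real (exp (-((x - b)^2)/2))"

lemma gauss_int': "integrable lborel (gauss b)"
  using gauss_int[of b] unfolding gauss_def[abs_def] .

lemma gauss_sq_int': "sq_int (gauss b)"
  using gauss_sq_int[of b] unfolding gauss_def[abs_def] .

lemma fourier_gauss': "fourier (gauss b) \<xi> = exp (- \<i> * complex_of_real (b * \<xi>)) * gauss 0 \<xi>"
  using fourier_gauss[of b \<xi>] unfolding gauss_def[abs_def] by simp

lemma sq_int_fourier_gauss: "sq_int (fourier (gauss b))"
  unfolding sq_int_def
proof
  show "fourier (gauss b) \<in> borel_measurable lborel" by (rule fourier_meas[OF gauss_int'])
  have "integrable lborel (\<lambda>x. (cmod (gauss 0 x))^2)" using gauss_sq_int'[of 0] by (simp add: sq_int_def)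
  moreover have "(cmod (fourier (gauss b) x))^2 = (cmod (gauss 0 x))^2" for x
    by (simp add: fourier_gauss' norm_mult)
  ultimately show "integrable lborel (\<lambda>x. (cmod (fourier (gauss b) x))^2)" by simp
qed

lemma FT_unique:
  assumes "is_FT u g1" "is_FT u g2"
  shows "AE \<xi> in lborel. g1 \<xi> = g2 \<xi>"
proof -
  have s1: "sq_int g1" and s2: "sq_int g2" using assms unfolding is_FT_def by auto
  have e: "(LINT \<xi>|lborel. g1 \<xi> * cnj (fourier (gauss b) \<xi>)) = (LINT \<xi>|lborel. g2 \<xi> * cnj (fourier (gauss b) \<xi>))" for b
    using assms gauss_int'[of b] gauss_sq_int'[of b] unfolding is_FT_def by metis
  define f where "f \<xi> = (g1 \<xi> - g2 \<xi>) * cnj (gauss 0 \<xi>)" for \<xi>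
  have fi: "integrable lborel f" unfolding f_def
    by (rule sq_int_prod[OF sq_int_lin[OF s1 s2, of "-1", simplified] gauss_sq_int'])
  have "AE \<xi> in lborel. f \<xi> = 0"
  proof (rule FU_cplx[OF fi])
    fix t
    have cg: "cnj (fourier (gauss t) \<xi>) = iexp (t * \<xi>) * cnj (gauss 0 \<xi>)" for \<xi>
      by (simp add: fourier_gauss' cnj_exp_mi)
    have "(LINT x|lborel. f x * iexp (t * x)) = (LINT \<xi>|lborel. g1 \<xi> * cnj (fourier (gauss t) \<xi>) - g2 \<xi> * cnj (fourier (gauss t) \<xi>))"
      by (intro Bochner_Integration.integral_cong refl) (simp add: f_def cg algebra_simps)
    also have "\<dots> = 0"
      using e[of t] sq_int_prod[OF s1 sq_int_fourier_gauss[of t]] sq_int_prod[OF s2 sq_int_fourier_gauss[of t]]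
      by simp
    finally show "(LINT x|lborel. f x * iexp (t * x)) = 0" .
  qed
  thus ?thesis
    by eventually_elim (simp add: f_def gauss_def)
qed



definition trunc :: "(real \<Rightarrow> complex) \<Rightarrow> nat \<Rightarrow> real \<Rightarrow> complex" where
  "trunc h n x = h x * indicator {x. \<bar>x\<bar> \<le> real n \<and> cmod (h x) \<le> real n} x"

lemma trunc_meas[measurable]:
  assumes [measurable]: "h \<in> borel_measurable lborel"
  shows "trunc h n \<in> borel_measurable lborel"
proof -
  have [measurable]: "{x. \<bar>x\<bar> \<le> real n \<and> cmod (h x) \<le> real n} \<in> sets lborel" by measurable
  show ?thesis unfolding trunc_def[abs_def] by measurable
qed

lemma trunc_bound: "cmod (trunc h n x) \<le> real n * indicator {-real n..real n} x"
  by (auto simp: trunc_def indicator_def norm_mult)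

lemma trunc_int:
  assumes [measurable]: "h \<in> borel_measurable lborel"
  shows "integrable lborel (trunc h n)" "sq_int (trunc h n)"
proof -
  have ii: "integrable lborel (\<lambda>x::real. real n * indicator {-real n..real n} x :: real)"
    by (intro integrable_mult_right) (auto simp: integrable_indicator_iff)
  show "integrable lborel (trunc h n)"
    by (rule Bochner_Integration.integrable_bound[OF ii]) (auto intro!: AE_I2 order.trans[OF trunc_bound])
  show "sq_int (trunc h n)" unfolding sq_int_def
  proof
    show "integrable lborel (\<lambda>x. (cmod (trunc h n x))\<^sup>2)"
    proof (rule Bochner_Integration.integrable_bound[OF integrable_mult_right[OF ii, of "real n"]])
      show "AE x in lborel. norm ((cmod (trunc h n x))\<^sup>2) \<le> norm (real n * (real n * indicator {-real n..real n} x))"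
      proof (intro AE_I2)
        fix x
        have "(cmod (trunc h n x))\<^sup>2 \<le> (real n * indicator {-real n..real n} x)^2"
          by (intro power_mono trunc_bound) auto
        thus "norm ((cmod (trunc h n x))\<^sup>2) \<le> norm (real n * (real n * indicator {-real n..real n} x))"
          by (auto simp: indicator_def power2_eq_square)
      qed
    qed measurable
  qed measurable
qed

lemma trunc_zero:
  assumes [measurable]: "h \<in> borel_measurable lborel"
    and z: "\<And>n. (LINT x|lborel. h x * cnj (trunc h n x)) = 0"
  shows "AE x in lborel. h x = 0"
proof -
  have A: "AE x in lborel. (cmod (h x))^2 * indicator {x. \<bar>x\<bar> \<le> real n \<and> cmod (h x) \<le> real n} x = 0" for n
  proof -
    have [measurable]: "{x. \<bar>x\<bar> \<le> real n \<and> cmod (h x) \<le> real n} \<in> sets lborel" by measurable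
    have eq: "h x * cnj (trunc h n x) = complex_of_real ((cmod (h x))^2 * indicator {x. \<bar>x\<bar> \<le> real n \<and> cmod (h x) \<le> real n} x)" for x
      by (auto simp: trunc_def indicator_def complex_norm_square[symmetric])
    have ii: "integrable lborel (\<lambda>x::real. real n * (real n * indicator {-real n..real n} x) :: real)"
      by (intro integrable_mult_right) (auto simp: integrable_indicator_iff)
    have ii': "integrable lborel (\<lambda>x. (cmod (h x))^2 * indicator {x. \<bar>x\<bar> \<le> real n \<and> cmod (h x) \<le> real n} x)"
    proof (rule Bochner_Integration.integrable_bound[OF ii])
      show "AE x in lborel. norm ((cmod (h x))^2 * indicator {x. \<bar>x\<bar> \<le> real n \<and> cmod (h x) \<le> real n} x)
          \<le> norm (real n * (real n * indicator {-real n..real n} x))"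
      proof (intro AE_I2)
        fix x
        show "norm ((cmod (h x))^2 * indicator {x. \<bar>x\<bar> \<le> real n \<and> cmod (h x) \<le> real n} x)
          \<le> norm (real n * (real n * indicator {-real n..real n} x))"
          by (auto simp: indicator_def power2_eq_square intro: mult_mono)
      qed
    qed measurable
    have "(LINT x|lborel. (cmod (h x))^2 * indicator {x. \<bar>x\<bar> \<le> real n \<and> cmod (h x) \<le> real n} x) = 0"
      using z[of n] unfolding eq by (simp only: integral_complex_of_real of_real_eq_0_iff)
    thus ?thesis using ii' by (subst (asm) integral_nonneg_eq_0_iff_AE) (auto simp: indicator_def)
  qed
  have "AE x in lborel. \<forall>n. (cmod (h x))^2 * indicator {x. \<bar>x\<bar> \<le> real n \<and> cmod (h x) \<le> real n} x = 0"
    by (simp only: AE_all_countable) (use A in blast)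
  thus ?thesis
  proof eventually_elim
    case (elim x)
    obtain n :: nat where "max \<bar>x\<bar> (cmod (h x)) \<le> real n" using real_nat_ceiling_ge by blast
    with elim[rule_format, of n] show ?case by (auto simp: indicator_def)
  qed
qed



definition vinv :: "(real \<Rightarrow> complex) \<Rightarrow> real \<Rightarrow> complex" where
  "vinv uh x = complex_of_real (1 / sqrt (2 * pi)) * (LINT \<xi>|lborel. uh \<xi> * exp (\<i> * complex_of_real (x * \<xi>)))"

lemma vinv_meas[measurable]:
  assumes [measurable]: "uh \<in> borel_measurable lborel"
  shows "vinv uh \<in> borel_measurable lborel"
  unfolding vinv_def[abs_def] by measurable

lemma vinv_bound:
  assumes "integrable lborel uh"
  shows "cmod (vinv uh x) \<le> (LINT \<xi>|lborel. cmod (uh \<xi>))"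
proof -
  have "cmod (vinv uh x) = \<bar>1 / sqrt (2 * pi)\<bar> * cmod (LINT \<xi>|lborel. uh \<xi> * exp (\<i> * complex_of_real (x * \<xi>)))"
    unfolding vinv_def by (simp add: norm_mult norm_divide)
  also have "\<dots> \<le> 1 * cmod (LINT \<xi>|lborel. uh \<xi> * exp (\<i> * complex_of_real (x * \<xi>)))"
  proof (intro mult_right_mono)
    have "1 \<le> sqrt (2*pi)" using pi_gt3 by (simp add: real_le_rsqrt)
    thus "\<bar>1 / sqrt (2 * pi)\<bar> \<le> 1" by simp
  qed auto
  also have "\<dots> \<le> (LINT \<xi>|lborel. cmod (uh \<xi> * exp (\<i> * complex_of_real (x * \<xi>))))"
    by (simp add: integral_norm_bound)
  also have "\<dots> = (LINT \<xi>|lborel. cmod (uh \<xi>))"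
    by (simp add: norm_mult)
  finally show ?thesis .
qed

lemma parseval_L1:
  assumes uh: "integrable lborel uh" and psi: "integrable lborel \<psi>"
  shows "(LINT \<xi>|lborel. uh \<xi> * cnj (fourier \<psi> \<xi>)) = (LINT x|lborel. vinv uh x * cnj (\<psi> x))"
proof -
  have [measurable]: "uh \<in> borel_measurable lborel" "\<psi> \<in> borel_measurable lborel" using uh psi by auto
  define c where "c = complex_of_real (1 / sqrt (2 * pi))"
  define F where "F x \<xi> = c * (uh \<xi> * cnj (\<psi> x) * exp (\<i> * complex_of_real (x * \<xi>)))" for x \<xi>
  have FF: "integrable (lborel \<Otimes>\<^sub>M lborel) (case_prod F)"
  proof (rule Bochner_Integration.integrable_bound)
    show "integrable (lborel \<Otimes>\<^sub>M lborel) (\<lambda>(x,y). complex_of_real (cmod (\<psi> x)) * (c * complex_of_real (cmod (uh y))))"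
      by (rule integrable_prod_lborel) (use uh psi in \<open>auto intro!: integrable_mult_right integrable_of_real\<close>)
    show "case_prod F \<in> borel_measurable (lborel \<Otimes>\<^sub>M lborel)" unfolding F_def[abs_def] by measurable
    show "AE p in lborel \<Otimes>\<^sub>M lborel. norm (case_prod F p) \<le> norm ((\<lambda>(x,y). complex_of_real (cmod (\<psi> x)) * (c * complex_of_real (cmod (uh y)))) p)"
    proof (intro AE_I2)
      fix p :: "real \<times> real"
      obtain x y where p: "p = (x, y)" by (cases p)
      have "norm (F x y) = cmod (\<psi> x) * (norm c * cmod (uh y))"
        unfolding F_def by (simp add: norm_mult)
      thus "norm (case_prod F p) \<le> norm ((\<lambda>(x,y). complex_of_real (cmod (\<psi> x)) * (c * complex_of_real (cmod (uh y)))) p)"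
        by (simp add: p norm_mult)
    qed
  qed
  have L: "uh \<xi> * cnj (fourier \<psi> \<xi>) = (LINT x|lborel. F x \<xi>)" for \<xi>
  proof -
    have "cnj (fourier \<psi> \<xi>) = c * cnj (LINT x|lborel. \<psi> x * exp (- \<i> * complex_of_real (x * \<xi>)))"
      unfolding fourier_def c_def by simp
    also have "cnj (LINT x|lborel. \<psi> x * exp (- \<i> * complex_of_real (x * \<xi>))) = (LINT x|lborel. cnj (\<psi> x * exp (- \<i> * complex_of_real (x * \<xi>))))"
      by (rule Bochner_Integration.integral_cnj[symmetric])
    also have "(LINT x|lborel. cnj (\<psi> x * exp (- \<i> * complex_of_real (x * \<xi>)))) = (LINT x|lborel. cnj (\<psi> x) * exp (\<i> * complex_of_real (x * \<xi>)))"
      by (intro Bochner_Integration.integral_cong refl) (simp add: cnj_exp_mi)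
    finally show ?thesis unfolding F_def by (simp add: mult_ac)
  qed
  have R: "vinv uh x * cnj (\<psi> x) = (LINT \<xi>|lborel. F x \<xi>)" for x
  proof -
    have "(LINT \<xi>|lborel. F x \<xi>) = (LINT \<xi>|lborel. (c * cnj (\<psi> x)) * (uh \<xi> * exp (\<i> * complex_of_real (x * \<xi>))))"
      by (intro Bochner_Integration.integral_cong refl) (simp add: F_def mult_ac)
    also have "\<dots> = (c * cnj (\<psi> x)) * (LINT \<xi>|lborel. uh \<xi> * exp (\<i> * complex_of_real (x * \<xi>)))"
      by (rule integral_mult_right_zero)
    finally show ?thesis unfolding vinv_def c_def by (simp only: mult_ac)
  qed
  have "(LINT \<xi>|lborel. uh \<xi> * cnj (fourier \<psi> \<xi>)) = (LINT \<xi>|lborel. LINT x|lborel. F x \<xi>)"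
    by (simp add: L)
  also have "\<dots> = (LINT x|lborel. LINT \<xi>|lborel. F x \<xi>)"
    by (rule lborel_pair.Fubini_integral[OF FF])
  also have "\<dots> = (LINT x|lborel. vinv uh x * cnj (\<psi> x))"
    by (simp add: R)
  finally show ?thesis .
qed

lemma Hs_FT:
  assumes "Hs \<sigma> u"
  shows "is_FT u (FT u)" "integrable lborel (\<lambda>\<xi>. (1 + \<xi>^2) powr \<sigma> * (cmod (FT u \<xi>))^2)"
proof -
  obtain uh where uh: "is_FT u uh" "integrable lborel (\<lambda>\<xi>. (1 + \<xi>^2) powr \<sigma> * (cmod (uh \<xi>))^2)"
    using assms unfolding Hs_def by blast
  show ft: "is_FT u (FT u)" unfolding FT_def by (rule someI[of "is_FT u", OF uh(1)])
  have [measurable]: "FT u \<in> borel_measurable lborel" using ft by (simp add: is_FT_def sq_int_def)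
  have "AE \<xi> in lborel. uh \<xi> = FT u \<xi>" by (rule FT_unique[OF uh(1) ft])
  hence ae: "AE \<xi> in lborel. (1 + \<xi>^2) powr \<sigma> * (cmod (uh \<xi>))^2 = (1 + \<xi>^2) powr \<sigma> * (cmod (FT u \<xi>))^2"
    by eventually_elim simp
  show "integrable lborel (\<lambda>\<xi>. (1 + \<xi>^2) powr \<sigma> * (cmod (FT u \<xi>))^2)"
    by (rule integrable_cong_AE_imp[OF uh(2) _ ae]) measurable
qed

lemma amgm_weight:
  fixes w a :: real assumes "w > 0"
  shows "a \<le> (w * a^2 + 1 / w) / 2"
proof -
  have "0 \<le> (w * a - 1)^2" by simp
  hence "2 * w * a \<le> w^2 * a^2 + 1" by (simp add: power2_eq_square algebra_simps)
  hence "2 * w * a / w \<le> (w^2 * a^2 + 1) / w" using assms by (intro divide_right_mono) auto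
  thus ?thesis using assms by (simp add: power2_eq_square field_simps)
qed

lemma Hs_L1:
  assumes s: "1/2 < \<sigma>" and "Hs \<sigma> u"
  shows "integrable lborel (FT u)"
proof -
  note h = Hs_FT[OF assms(2)]
  have [measurable]: "FT u \<in> borel_measurable lborel" using h by (simp add: is_FT_def sq_int_def)
  show ?thesis
  proof (rule Bochner_Integration.integrable_bound)
    show "integrable lborel (\<lambda>\<xi>. ((1 + \<xi>^2) powr \<sigma> * (cmod (FT u \<xi>))^2 + (1 + \<xi>^2) powr (-\<sigma>)) / 2)"
      using h(2) int_weight[OF s] by (intro integrable_divide Bochner_Integration.integrable_add)
    show "AE \<xi> in lborel. norm (FT u \<xi>) \<le> norm (((1 + \<xi>^2) powr \<sigma> * (cmod (FT u \<xi>))^2 + (1 + \<xi>^2) powr (-\<sigma>)) / 2)"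
    proof (intro AE_I2)
      fix \<xi> :: real
      have "0 < 1 + \<xi>^2" by (intro add_pos_nonneg) auto
      hence nz: "1 + \<xi>^2 \<noteq> 0" by simp
      have w: "(1 + \<xi>^2) powr \<sigma> > 0" using nz by simp
      have "norm (FT u \<xi>) \<le> ((1 + \<xi>^2) powr \<sigma> * (cmod (FT u \<xi>))^2 + 1 / (1 + \<xi>^2) powr \<sigma>) / 2"
        by (rule amgm_weight[OF w])
      also have "\<dots> = ((1 + \<xi>^2) powr \<sigma> * (cmod (FT u \<xi>))^2 + (1 + \<xi>^2) powr (-\<sigma>)) / 2"
        using nz by (simp add: powr_minus_divide)
      finally show "norm (FT u \<xi>) \<le> norm (((1 + \<xi>^2) powr \<sigma> * (cmod (FT u \<xi>))^2 + (1 + \<xi>^2) powr (-\<sigma>)) / 2)"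
        by simp
    qed
  qed measurable
qed

lemma FT_zero_imp:
  assumes "is_FT u uh" "AE \<xi> in lborel. uh \<xi> = 0"
  shows "AE x in lborel. u x = 0"
proof (rule trunc_zero)
  show um[measurable]: "u \<in> borel_measurable lborel" using assms by (simp add: is_FT_def sq_int_def)
  fix n
  have "(LINT x|lborel. u x * cnj (trunc u n x)) = (LINT \<xi>|lborel. uh \<xi> * cnj (fourier (trunc u n) \<xi>))"
    using assms(1) trunc_int[OF um, of n] unfolding is_FT_def by blast
  also have "\<dots> = 0"
    by (rule integral_eq_zero_AE) (use assms(2) in eventually_elim, simp)
  finally show "(LINT x|lborel. u x * cnj (trunc u n x)) = 0" by simp
qed

lemma Hs_bounded:
  assumes s: "1/2 < \<sigma>" and H: "Hs \<sigma> u"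
  shows "\<exists>C. AE x in lborel. cmod (u x) \<le> C"
proof -
  note h = Hs_FT[OF H]
  have i: "integrable lborel (FT u)" by (rule Hs_L1[OF s H])
  have [measurable]: "FT u \<in> borel_measurable lborel" "u \<in> borel_measurable lborel"
    using h by (auto simp: is_FT_def sq_int_def)
  define C where "C = (LINT \<xi>|lborel. cmod (FT u \<xi>))"
  have vb: "cmod (vinv (FT u) x) \<le> C" for x unfolding C_def by (rule vinv_bound[OF i])
  define hh where "hh x = u x - vinv (FT u) x" for x
  have hhm[measurable]: "hh \<in> borel_measurable lborel" unfolding hh_def[abs_def] by measurable
  have "AE x in lborel. hh x = 0"
  proof (rule trunc_zero)
    fix n
    note t = trunc_int[OF hhm, of n]
    have su: "sq_int u" using h(1) unfolding is_FT_def by blast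
    have i1: "integrable lborel (\<lambda>x. u x * cnj (trunc hh n x))"
      by (rule sq_int_prod[OF su t(2)])
    have i2: "integrable lborel (\<lambda>x. vinv (FT u) x * cnj (trunc hh n x))"
    proof (rule Bochner_Integration.integrable_bound)
      show "integrable lborel (\<lambda>x. C * norm (trunc hh n x))" using t(1) by (intro integrable_mult_right integrable_norm)
      show "AE x in lborel. norm (vinv (FT u) x * cnj (trunc hh n x)) \<le> norm (C * norm (trunc hh n x))"
      proof (intro AE_I2)
        fix x
        have "cmod (vinv (FT u) x) * cmod (trunc hh n x) \<le> C * cmod (trunc hh n x)"
          by (rule mult_right_mono[OF vb]) simp
        thus "norm (vinv (FT u) x * cnj (trunc hh n x)) \<le> norm (C * norm (trunc hh n x))"
          by (simp add: norm_mult)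
      qed
    qed measurable
    have "(LINT x|lborel. hh x * cnj (trunc hh n x))
        = (LINT x|lborel. u x * cnj (trunc hh n x)) - (LINT x|lborel. vinv (FT u) x * cnj (trunc hh n x))"
    proof -
      have "(LINT x|lborel. hh x * cnj (trunc hh n x)) = (LINT x|lborel. u x * cnj (trunc hh n x) - vinv (FT u) x * cnj (trunc hh n x))"
        by (intro Bochner_Integration.integral_cong refl) (simp add: hh_def algebra_simps)
      also have "\<dots> = (LINT x|lborel. u x * cnj (trunc hh n x)) - (LINT x|lborel. vinv (FT u) x * cnj (trunc hh n x))"
        by (rule Bochner_Integration.integral_diff[OF i1 i2])
      finally show ?thesis .
    qed
    also have "(LINT x|lborel. u x * cnj (trunc hh n x)) = (LINT \<xi>|lborel. FT u \<xi> * cnj (fourier (trunc hh n) \<xi>))"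
      using h(1) t unfolding is_FT_def by blast
    also have "\<dots> = (LINT x|lborel. vinv (FT u) x * cnj (trunc hh n x))"
      by (rule parseval_L1[OF i t(1)])
    finally show "(LINT x|lborel. hh x * cnj (trunc hh n x)) = 0" by simp
  qed measurable
  hence "AE x in lborel. cmod (u x) \<le> C"
    by eventually_elim (use vb in \<open>auto simp: hh_def\<close>)
  thus ?thesis by blast
qed



lemma bern_strict:
  fixes r x :: real assumes r: "r > 1" and x: "x > 0" "x \<noteq> 1"
  shows "x powr r > 1 + r * (x - 1)"
proof (cases "x > 1")
  case True
  have "\<exists>z. 1 < z \<and> z < x \<and> (x powr r - 1 powr r = (x - 1) * (r * z powr (r - 1)))"
    by (rule MVT2[OF True]) (auto intro!: has_real_derivative_powr)
  then obtain z where z: "1 < z" "z < x" "x powr r - 1 = (x - 1) * (r * z powr (r - 1))" by auto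
  have "1 < z powr (r - 1)" using z r by (intro gr_one_powr) auto
  hence "(x - 1) * r * 1 < (x - 1) * r * z powr (r - 1)" using True r by (intro mult_strict_left_mono) auto
  thus ?thesis using z by (simp add: algebra_simps)
next
  case False
  hence x1: "x < 1" using x by simp
  have "\<exists>z. x < z \<and> z < 1 \<and> (1 powr r - x powr r = (1 - x) * (r * z powr (r - 1)))"
    by (rule MVT2[OF x1]) (use x in \<open>auto intro!: has_real_derivative_powr\<close>)
  then obtain z where z: "x < z" "z < 1" "1 - x powr r = (1 - x) * (r * z powr (r - 1))" by auto
  have "z powr (r - 1) < 1 powr (r - 1)" using z r x by (intro powr_less_mono2) auto
  hence "z powr (r - 1) < 1" by simp
  hence "(1 - x) * r * z powr (r - 1) < (1 - x) * r * 1" using x1 r by (intro mult_strict_left_mono) auto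
  thus ?thesis using z by (simp add: algebra_simps)
qed

lemma p1_pos:
  assumes s: "1/2 < \<sigma>" and "\<xi> \<noteq> 0"
  shows "p1 \<sigma> \<xi> > 0"
proof (cases "\<xi> + 1 > 0")
  case True
  have "(\<xi> + 1) powr (2 * \<sigma>) > 1 + 2 * \<sigma> * (\<xi> + 1 - 1)"
    by (rule bern_strict) (use s True assms(2) in auto)
  thus ?thesis using True by (simp add: p1_def algebra_simps abs_of_pos)
next
  case False
  have "\<bar>\<xi> + 1\<bar> powr (2 * \<sigma>) \<ge> 0" by simp
  moreover have "2 * \<sigma> * \<xi> \<le> 2 * \<sigma> * (-1)" using False s by (intro mult_left_mono) auto
  ultimately show ?thesis using s unfolding p1_def by linarith
qed

lemma p1_nonneg:
  assumes s: "1/2 < \<sigma>"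
  shows "p1 \<sigma> \<xi> \<ge> 0"
  using p1_pos[OF s, of \<xi>] by (cases "\<xi> = 0") (auto simp: p1_def)

lemma p1_bound:
  assumes s: "1/2 < \<sigma>" and s1: "\<sigma> < 1"
  shows "p1 \<sigma> \<xi> \<le> 5 * (1 + \<xi>^2) powr \<sigma>"
proof -
  have b1: "1 \<le> 1 + \<xi>^2" by simp
  have w1: "1 \<le> (1 + \<xi>^2) powr \<sigma>" using s by (intro ge_one_powr_ge_zero) auto
  have e1: "\<bar>\<xi> + 1\<bar> powr (2 * \<sigma>) \<le> 2 * (1 + \<xi>^2) powr \<sigma>"
  proof (cases "\<xi> + 1 = 0")
    case True thus ?thesis using w1 by simp
  next
    case False
    have "\<bar>\<xi> + 1\<bar> powr 2 = (\<xi> + 1)^2" using False powr_realpow[of "\<bar>\<xi> + 1\<bar>" 2] by simp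
    have "\<bar>\<xi> + 1\<bar> powr (2 * \<sigma>) = (\<bar>\<xi> + 1\<bar> powr 2) powr \<sigma>" by (rule powr_powr[symmetric])
    also have "\<dots> = ((\<xi> + 1)^2) powr \<sigma>" by (rule arg_cong[OF \<open>\<bar>\<xi> + 1\<bar> powr 2 = (\<xi> + 1)^2\<close>])
    also have "((\<xi> + 1)^2) powr \<sigma> \<le> (2 * (1 + \<xi>^2)) powr \<sigma>"
    proof (rule powr_mono2)
      show "(\<xi> + 1)^2 \<le> 2 * (1 + \<xi>^2)" using sum_squares_bound[of \<xi> 1] by (simp add: power2_eq_square algebra_simps)
    qed (use s in auto)
    also have "\<dots> = 2 powr \<sigma> * (1 + \<xi>^2) powr \<sigma>" by (rule powr_mult)
    also have "2 powr \<sigma> \<le> 2 powr 1" using s s1 by (intro powr_mono) auto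
    hence "2 powr \<sigma> * (1 + \<xi>^2) powr \<sigma> \<le> 2 * (1 + \<xi>^2) powr \<sigma>" by (intro mult_right_mono) auto
    finally show ?thesis .
  qed
  have e2: "\<bar>\<xi>\<bar> \<le> (1 + \<xi>^2) powr \<sigma>"
  proof -
    have "\<bar>\<xi>\<bar> \<le> sqrt (1 + \<xi>^2)" by (simp add: real_le_rsqrt)
    also have "sqrt (1 + \<xi>^2) = (1 + \<xi>^2) powr (1/2)" by (simp add: powr_half_sqrt add_pos_nonneg)
    also have "\<dots> \<le> (1 + \<xi>^2) powr \<sigma>" using s by (intro powr_mono) auto
    finally show ?thesis .
  qed
  have "- 2 * \<sigma> * \<xi> \<le> 2 * \<bar>\<xi>\<bar>"
  proof -
    have "- 2 * \<sigma> * \<xi> \<le> 2 * \<sigma> * \<bar>\<xi>\<bar>" using mult_left_mono[of "-\<xi>" "\<bar>\<xi>\<bar>" \<sigma>] s by simp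
    also have "\<dots> \<le> 2 * 1 * \<bar>\<xi>\<bar>" using s1 by (intro mult_right_mono) auto
    finally show ?thesis by simp
  qed
  thus ?thesis using e1 e2 w1 by (simp add: p1_def)
qed



lemma fourier_int_prod:
  assumes uh: "integrable lborel uh" and psi: "integrable lborel \<psi>"
  shows "integrable lborel (\<lambda>\<xi>. uh \<xi> * cnj (fourier \<psi> \<xi>))"
proof (rule Bochner_Integration.integrable_bound)
  have [measurable]: "uh \<in> borel_measurable lborel" using uh by auto
  have [measurable]: "fourier \<psi> \<in> borel_measurable lborel" by (rule fourier_meas[OF psi])
  show "integrable lborel (\<lambda>\<xi>. norm (uh \<xi>) * (LINT x|lborel. cmod (\<psi> x)))"
    using uh by (intro integrable_mult_left integrable_norm)
  show "(\<lambda>\<xi>. uh \<xi> * cnj (fourier \<psi> \<xi>)) \<in> borel_measurable lborel" by measurable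
  show "AE \<xi> in lborel. norm (uh \<xi> * cnj (fourier \<psi> \<xi>)) \<le> norm (norm (uh \<xi>) * (LINT x|lborel. cmod (\<psi> x)))"
  proof (intro AE_I2)
    fix \<xi>
    have "norm (uh \<xi>) * cmod (fourier \<psi> \<xi>) \<le> norm (uh \<xi>) * (LINT x|lborel. cmod (\<psi> x))"
      by (intro mult_left_mono fourier_bound[OF psi]) auto
    moreover have "0 \<le> (LINT x|lborel. cmod (\<psi> x))" by simp
    ultimately show "norm (uh \<xi> * cnj (fourier \<psi> \<xi>)) \<le> norm (norm (uh \<xi>) * (LINT x|lborel. cmod (\<psi> x)))"
      by (simp add: norm_mult)
  qed
qed

lemma is_FT_lin:
  assumes u: "is_FT u uh" and v: "is_FT v vh" and iu: "integrable lborel uh" and iv: "integrable lborel vh"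
  shows "is_FT (\<lambda>x. u x + c * v x) (\<lambda>\<xi>. uh \<xi> + c * vh \<xi>)"
proof -
  have su: "sq_int u" "sq_int uh" and sv: "sq_int v" "sq_int vh" using u v unfolding is_FT_def by auto
  have pu: "(LINT x|lborel. u x * cnj (\<phi> x)) = (LINT \<xi>|lborel. uh \<xi> * cnj (fourier \<phi> \<xi>))"
    and pv: "(LINT x|lborel. v x * cnj (\<phi> x)) = (LINT \<xi>|lborel. vh \<xi> * cnj (fourier \<phi> \<xi>))"
    if "integrable lborel \<phi>" "sq_int \<phi>" for \<phi>
    using u v that unfolding is_FT_def by blast+
  show ?thesis unfolding is_FT_def
  proof (intro conjI allI impI)
    show "sq_int (\<lambda>x. u x + c * v x)" by (rule sq_int_lin[OF su(1) sv(1)])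
    show "sq_int (\<lambda>\<xi>. uh \<xi> + c * vh \<xi>)" by (rule sq_int_lin[OF su(2) sv(2)])
    fix \<phi> assume ph: "integrable lborel \<phi> \<and> sq_int \<phi>"
    have i1: "integrable lborel (\<lambda>x. u x * cnj (\<phi> x))" "integrable lborel (\<lambda>x. v x * cnj (\<phi> x))"
      using sq_int_prod[OF su(1)] sq_int_prod[OF sv(1)] ph by auto
    have i2: "integrable lborel (\<lambda>\<xi>. uh \<xi> * cnj (fourier \<phi> \<xi>))" "integrable lborel (\<lambda>\<xi>. vh \<xi> * cnj (fourier \<phi> \<xi>))"
      using fourier_int_prod[OF iu] fourier_int_prod[OF iv] ph by auto
    have "(LINT x|lborel. (u x + c * v x) * cnj (\<phi> x)) = (LINT x|lborel. u x * cnj (\<phi> x) + c * (v x * cnj (\<phi> x)))"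
      by (intro Bochner_Integration.integral_cong refl) (simp add: algebra_simps)
    also have "\<dots> = (LINT x|lborel. u x * cnj (\<phi> x)) + c * (LINT x|lborel. v x * cnj (\<phi> x))"
      using i1 by simp
    also have "\<dots> = (LINT \<xi>|lborel. uh \<xi> * cnj (fourier \<phi> \<xi>)) + c * (LINT \<xi>|lborel. vh \<xi> * cnj (fourier \<phi> \<xi>))"
      using pu pv ph by simp
    also have "\<dots> = (LINT \<xi>|lborel. uh \<xi> * cnj (fourier \<phi> \<xi>) + c * (vh \<xi> * cnj (fourier \<phi> \<xi>)))"
      using i2 by simp
    also have "\<dots> = (LINT \<xi>|lborel. (uh \<xi> + c * vh \<xi>) * cnj (fourier \<phi> \<xi>))"
      by (intro Bochner_Integration.integral_cong refl) (simp add: algebra_simps)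
    finally show "(LINT x|lborel. (u x + c * v x) * cnj (\<phi> x)) = (LINT \<xi>|lborel. (uh \<xi> + c * vh \<xi>) * cnj (fourier \<phi> \<xi>))" .
  qed
qed

lemma sq_int_scale: "sq_int f \<Longrightarrow> sq_int (\<lambda>x. c * f x)"
  using sq_int_lin[of "\<lambda>x. 0" f c] by (simp add: sq_int_def)

lemma is_FT_scale:
  assumes u: "is_FT u uh"
  shows "is_FT (\<lambda>x. c * u x) (\<lambda>\<xi>. c * uh \<xi>)"
  unfolding is_FT_def
proof (intro conjI allI impI)
  show "sq_int (\<lambda>x. c * u x)" "sq_int (\<lambda>x. c * uh x)" using u sq_int_scale unfolding is_FT_def by auto
  fix \<phi> assume ph: "integrable lborel \<phi> \<and> sq_int \<phi>"
  have "(LINT x|lborel. c * u x * cnj (\<phi> x)) = c * (LINT x|lborel. u x * cnj (\<phi> x))"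
    by (simp add: mult.assoc)
  also have "\<dots> = c * (LINT \<xi>|lborel. uh \<xi> * cnj (fourier \<phi> \<xi>))" using u ph unfolding is_FT_def by simp
  also have "\<dots> = (LINT \<xi>|lborel. c * uh \<xi> * cnj (fourier \<phi> \<xi>))" by (simp add: mult.assoc)
  finally show "(LINT x|lborel. c * u x * cnj (\<phi> x)) = (LINT \<xi>|lborel. c * uh \<xi> * cnj (fourier \<phi> \<xi>))" .
qed

lemma weighted_lin:
  assumes [measurable]: "f \<in> borel_measurable lborel" "g \<in> borel_measurable lborel"
    and f: "integrable lborel (\<lambda>\<xi>. (1 + \<xi>^2) powr \<sigma> * (cmod (f \<xi>))^2)"
    and g: "integrable lborel (\<lambda>\<xi>. (1 + \<xi>^2) powr \<sigma> * (cmod (g \<xi>))^2)"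
  shows "integrable lborel (\<lambda>\<xi>. (1 + \<xi>^2) powr \<sigma> * (cmod (f \<xi> + c * g \<xi>))^2)"
proof (rule Bochner_Integration.integrable_bound)
  show "integrable lborel (\<lambda>\<xi>. 2 * ((1 + \<xi>^2) powr \<sigma> * (cmod (f \<xi>))^2) + 2 * (cmod c)^2 * ((1 + \<xi>^2) powr \<sigma> * (cmod (g \<xi>))^2))"
    using f g by (intro Bochner_Integration.integrable_add integrable_mult_right)
  show "AE \<xi> in lborel. norm ((1 + \<xi>^2) powr \<sigma> * (cmod (f \<xi> + c * g \<xi>))^2) \<le> norm (2 * ((1 + \<xi>^2) powr \<sigma> * (cmod (f \<xi>))^2) + 2 * (cmod c)^2 * ((1 + \<xi>^2) powr \<sigma> * (cmod (g \<xi>))^2))"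
  proof (intro AE_I2)
    fix \<xi> :: real
    have w: "0 \<le> (1 + \<xi>^2) powr \<sigma>" by simp
    have "cmod (f \<xi> + c * g \<xi>) \<le> cmod (f \<xi>) + cmod c * cmod (g \<xi>)"
      using norm_triangle_ineq[of "f \<xi>" "c * g \<xi>"] by (simp add: norm_mult)
    hence "(cmod (f \<xi> + c * g \<xi>))^2 \<le> (cmod (f \<xi>) + cmod c * cmod (g \<xi>))^2"
      by (intro power_mono) auto
    also have "\<dots> \<le> 2 * (cmod (f \<xi>))^2 + 2 * (cmod c)^2 * (cmod (g \<xi>))^2"
      using sum_squares_bound[of "cmod (f \<xi>)" "cmod c * cmod (g \<xi>)"]
      by (simp add: power2_eq_square algebra_simps)
    finally have "(1 + \<xi>^2) powr \<sigma> * (cmod (f \<xi> + c * g \<xi>))^2 \<le> (1 + \<xi>^2) powr \<sigma> * (2 * (cmod (f \<xi>))^2 + 2 * (cmod c)^2 * (cmod (g \<xi>))^2)"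
      by (rule mult_left_mono[OF _ w])
    thus "norm ((1 + \<xi>^2) powr \<sigma> * (cmod (f \<xi> + c * g \<xi>))^2) \<le> norm (2 * ((1 + \<xi>^2) powr \<sigma> * (cmod (f \<xi>))^2) + 2 * (cmod c)^2 * ((1 + \<xi>^2) powr \<sigma> * (cmod (g \<xi>))^2))"
      by (simp add: algebra_simps)
  qed
qed measurable

lemma Hs_lin:
  assumes s: "1/2 < \<sigma>" and u: "Hs \<sigma> u" and v: "Hs \<sigma> v"
  shows "Hs \<sigma> (\<lambda>x. u x + c * v x)"
    and "AE \<xi> in lborel. FT (\<lambda>x. u x + c * v x) \<xi> = FT u \<xi> + c * FT v \<xi>"
proof -
  note hu = Hs_FT[OF u] and hv = Hs_FT[OF v]
  have [measurable]: "FT u \<in> borel_measurable lborel" "FT v \<in> borel_measurable lborel"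
    using hu hv by (auto simp: is_FT_def sq_int_def)
  have ft: "is_FT (\<lambda>x. u x + c * v x) (\<lambda>\<xi>. FT u \<xi> + c * FT v \<xi>)"
    by (rule is_FT_lin[OF hu(1) hv(1) Hs_L1[OF s u] Hs_L1[OF s v]])
  show H: "Hs \<sigma> (\<lambda>x. u x + c * v x)" unfolding Hs_def
    using ft weighted_lin[OF _ _ hu(2) hv(2), of c] by auto
  show "AE \<xi> in lborel. FT (\<lambda>x. u x + c * v x) \<xi> = FT u \<xi> + c * FT v \<xi>"
    by (rule FT_unique[OF Hs_FT(1)[OF H] ft])
qed

lemma Hs_scale:
  assumes u: "Hs \<sigma> u"
  shows "Hs \<sigma> (\<lambda>x. c * u x)"
    and "AE \<xi> in lborel. FT (\<lambda>x. c * u x) \<xi> = c * FT u \<xi>"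
proof -
  note hu = Hs_FT[OF u]
  have [measurable]: "FT u \<in> borel_measurable lborel" using hu by (auto simp: is_FT_def sq_int_def)
  have ft: "is_FT (\<lambda>x. c * u x) (\<lambda>\<xi>. c * FT u \<xi>)" by (rule is_FT_scale[OF hu(1)])
  have "integrable lborel (\<lambda>\<xi>. (1 + \<xi>^2) powr \<sigma> * (cmod (0 + c * FT u \<xi>))^2)"
    by (rule weighted_lin[OF _ _ _ hu(2)]) auto
  hence "integrable lborel (\<lambda>\<xi>. (1 + \<xi>^2) powr \<sigma> * (cmod (c * FT u \<xi>))^2)" by simp
  thus H: "Hs \<sigma> (\<lambda>x. c * u x)" unfolding Hs_def using ft by auto
  show "AE \<xi> in lborel. FT (\<lambda>x. c * u x) \<xi> = c * FT u \<xi>"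
    by (rule FT_unique[OF Hs_FT(1)[OF H] ft])
qed



definition Aq :: "(real \<Rightarrow> complex) \<Rightarrow> real" where
  "Aq f = (LINT x|lborel. (cmod (f x))^2)"
definition Qq :: "real \<Rightarrow> (real \<Rightarrow> complex) \<Rightarrow> real" where
  "Qq \<sigma> f = (LINT \<xi>|lborel. p1 \<sigma> \<xi> * (cmod (FT f \<xi>))^2)"

lemma L2norm_Aq: "L2norm f = sqrt (Aq f)" by (simp add: L2norm_def Aq_def)
lemma P1half_Qq: "P1half_norm \<sigma> f = sqrt (Qq \<sigma> f)" by (simp add: P1half_norm_def Qq_def)

lemma cmod_sq_add:
  "(cmod (a + complex_of_real t * b))^2 = (cmod a)^2 + 2 * t * Re (a * cnj b) + t^2 * (cmod b)^2"
  unfolding cmod_power2 by (simp add: power2_eq_square algebra_simps)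

lemma prod_le_bound:
  fixes x y K2 g :: real
  shows "0 \<le> x \<Longrightarrow> x \<le> K2 \<Longrightarrow> 0 \<le> y \<Longrightarrow> y \<le> g \<Longrightarrow> x * y \<le> K2 * g"
  by (rule mult_mono) auto

lemma ab_le: "0 \<le> a \<Longrightarrow> 0 \<le> b \<Longrightarrow> a * (b::real) \<le> a^2 + b^2"
proof -
  assume "0 \<le> a" "0 \<le> b"
  hence "0 \<le> a * b" by simp
  moreover have "2 * (a * b) \<le> a^2 + b^2" using sum_squares_bound[of a b] by (simp add: power2_eq_square)
  ultimately show ?thesis by linarith
qed

lemma Aq_exp:
  assumes su: "sq_int u" and sp: "sq_int \<phi>"
  shows "Aq (\<lambda>x. u x + complex_of_real t * \<phi> x) = Aq u + 2 * t * Re (LINT x|lborel. u x * cnj (\<phi> x)) + t^2 * Aq \<phi>"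
proof -
  have i1: "integrable lborel (\<lambda>x. (cmod (u x))^2)" "integrable lborel (\<lambda>x. (cmod (\<phi> x))^2)"
    using su sp by (auto simp: sq_int_def)
  have i2: "integrable lborel (\<lambda>x. u x * cnj (\<phi> x))" by (rule sq_int_prod[OF su sp])
  have i3: "integrable lborel (\<lambda>x. Re (u x * cnj (\<phi> x)))" by (rule integrable_Re[OF i2])
  have "Aq (\<lambda>x. u x + complex_of_real t * \<phi> x) = (LINT x|lborel. (cmod (u x))^2 + 2 * t * Re (u x * cnj (\<phi> x)) + t^2 * (cmod (\<phi> x))^2)"
    unfolding Aq_def by (simp add: cmod_sq_add)
  also have "\<dots> = Aq u + 2 * t * (LINT x|lborel. Re (u x * cnj (\<phi> x))) + t^2 * Aq \<phi>"
    using i1 i3 unfolding Aq_def by simp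
  also have "(LINT x|lborel. Re (u x * cnj (\<phi> x))) = Re (LINT x|lborel. u x * cnj (\<phi> x))"
    by (rule integral_Re[OF i2])
  finally show ?thesis .
qed

lemma p1_int1:
  assumes s: "1/2 < \<sigma>" "\<sigma> < 1" and u: "Hs \<sigma> u"
  shows "integrable lborel (\<lambda>\<xi>. p1 \<sigma> \<xi> * (cmod (FT u \<xi>))^2)"
proof -
  note hu = Hs_FT[OF u]
  have [measurable]: "FT u \<in> borel_measurable lborel" using hu by (auto simp: is_FT_def sq_int_def)
  show ?thesis
  proof (rule Bochner_Integration.integrable_bound)
    show "integrable lborel (\<lambda>\<xi>. 5 * ((1 + \<xi>^2) powr \<sigma> * (cmod (FT u \<xi>))^2))"
      using hu(2) by (rule integrable_mult_right)
    show "AE \<xi> in lborel. norm (p1 \<sigma> \<xi> * (cmod (FT u \<xi>))^2) \<le> norm (5 * ((1 + \<xi>^2) powr \<sigma> * (cmod (FT u \<xi>))^2))"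
    proof (intro AE_I2)
      fix \<xi>
      have "p1 \<sigma> \<xi> * (cmod (FT u \<xi>))^2 \<le> (5 * (1 + \<xi>^2) powr \<sigma>) * (cmod (FT u \<xi>))^2"
        by (intro mult_right_mono p1_bound s) auto
      thus "norm (p1 \<sigma> \<xi> * (cmod (FT u \<xi>))^2) \<le> norm (5 * ((1 + \<xi>^2) powr \<sigma> * (cmod (FT u \<xi>))^2))"
        using p1_nonneg[OF s(1), of \<xi>] by (simp add: mult.assoc)
    qed
    show "(\<lambda>\<xi>. p1 \<sigma> \<xi> * (cmod (FT u \<xi>))^2) \<in> borel_measurable lborel" unfolding p1_def by measurable
  qed
qed

lemma p1_int2:
  assumes s: "1/2 < \<sigma>" "\<sigma> < 1" and u: "Hs \<sigma> u" and v: "Hs \<sigma> v"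
  shows "integrable lborel (\<lambda>\<xi>. complex_of_real (p1 \<sigma> \<xi>) * FT u \<xi> * cnj (FT v \<xi>))"
proof -
  note hu = Hs_FT[OF u] and hv = Hs_FT[OF v]
  have [measurable]: "FT u \<in> borel_measurable lborel" "FT v \<in> borel_measurable lborel"
    using hu hv by (auto simp: is_FT_def sq_int_def)
  show ?thesis
  proof (rule Bochner_Integration.integrable_bound)
    show "integrable lborel (\<lambda>\<xi>. p1 \<sigma> \<xi> * (cmod (FT u \<xi>))^2 + p1 \<sigma> \<xi> * (cmod (FT v \<xi>))^2)"
      using p1_int1[OF s u] p1_int1[OF s v] by (rule Bochner_Integration.integrable_add)
    show "AE \<xi> in lborel. norm (complex_of_real (p1 \<sigma> \<xi>) * FT u \<xi> * cnj (FT v \<xi>)) \<le> norm (p1 \<sigma> \<xi> * (cmod (FT u \<xi>))^2 + p1 \<sigma> \<xi> * (cmod (FT v \<xi>))^2)"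
    proof (intro AE_I2)
      fix \<xi>
      have p: "0 \<le> p1 \<sigma> \<xi>" by (rule p1_nonneg[OF s(1)])
      have "cmod (FT u \<xi>) * cmod (FT v \<xi>) \<le> (cmod (FT u \<xi>))^2 + (cmod (FT v \<xi>))^2" by (rule ab_le) auto
      hence "p1 \<sigma> \<xi> * (cmod (FT u \<xi>) * cmod (FT v \<xi>)) \<le> p1 \<sigma> \<xi> * ((cmod (FT u \<xi>))^2 + (cmod (FT v \<xi>))^2)"
        by (rule mult_left_mono[OF _ p])
      thus "norm (complex_of_real (p1 \<sigma> \<xi>) * FT u \<xi> * cnj (FT v \<xi>)) \<le> norm (p1 \<sigma> \<xi> * (cmod (FT u \<xi>))^2 + p1 \<sigma> \<xi> * (cmod (FT v \<xi>))^2)"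
        using p by (simp add: norm_mult algebra_simps)
    qed
    show "(\<lambda>\<xi>. complex_of_real (p1 \<sigma> \<xi>) * FT u \<xi> * cnj (FT v \<xi>)) \<in> borel_measurable lborel" unfolding p1_def by measurable
  qed
qed

lemma Qq_exp:
  assumes s: "1/2 < \<sigma>" "\<sigma> < 1" and u: "Hs \<sigma> u" and v: "Hs \<sigma> v"
  shows "Qq \<sigma> (\<lambda>x. u x + complex_of_real t * v x) = Qq \<sigma> u
     + 2 * t * Re (LINT \<xi>|lborel. complex_of_real (p1 \<sigma> \<xi>) * FT u \<xi> * cnj (FT v \<xi>)) + t^2 * Qq \<sigma> v"
proof -
  note hu = Hs_FT[OF u] and hv = Hs_FT[OF v]
  note H = Hs_lin[OF s(1) u v, of "complex_of_real t"]
  note hw = Hs_FT[OF H(1)]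
  have [measurable]: "FT u \<in> borel_measurable lborel" "FT v \<in> borel_measurable lborel"
     "FT (\<lambda>x. u x + complex_of_real t * v x) \<in> borel_measurable lborel"
    using hu hv hw by (auto simp: is_FT_def sq_int_def)
  have i2: "integrable lborel (\<lambda>\<xi>. complex_of_real (p1 \<sigma> \<xi>) * FT u \<xi> * cnj (FT v \<xi>))" by (rule p1_int2[OF s u v])
  have i3: "integrable lborel (\<lambda>\<xi>. Re (complex_of_real (p1 \<sigma> \<xi>) * FT u \<xi> * cnj (FT v \<xi>)))" by (rule integrable_Re[OF i2])
  have i1: "integrable lborel (\<lambda>\<xi>. p1 \<sigma> \<xi> * (cmod (FT u \<xi>))^2)" "integrable lborel (\<lambda>\<xi>. p1 \<sigma> \<xi> * (cmod (FT v \<xi>))^2)"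
    using p1_int1[OF s u] p1_int1[OF s v] by auto
  have "Qq \<sigma> (\<lambda>x. u x + complex_of_real t * v x) = (LINT \<xi>|lborel. p1 \<sigma> \<xi> * (cmod (FT u \<xi> + complex_of_real t * FT v \<xi>))^2)"
    unfolding Qq_def
  proof (rule Bochner_Integration.integral_cong_AE)
    show "AE \<xi> in lborel. p1 \<sigma> \<xi> * (cmod (FT (\<lambda>x. u x + complex_of_real t * v x) \<xi>))\<^sup>2 = p1 \<sigma> \<xi> * (cmod (FT u \<xi> + complex_of_real t * FT v \<xi>))\<^sup>2"
      using H(2) by eventually_elim simp
  qed (unfold p1_def, measurable)
  also have "\<dots> = (LINT \<xi>|lborel. p1 \<sigma> \<xi> * (cmod (FT u \<xi>))^2 + 2 * t * Re (complex_of_real (p1 \<sigma> \<xi>) * FT u \<xi> * cnj (FT v \<xi>)) + t^2 * (p1 \<sigma> \<xi> * (cmod (FT v \<xi>))^2))"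
    by (intro Bochner_Integration.integral_cong refl) (simp add: cmod_sq_add algebra_simps)
  also have "\<dots> = Qq \<sigma> u + 2 * t * (LINT \<xi>|lborel. Re (complex_of_real (p1 \<sigma> \<xi>) * FT u \<xi> * cnj (FT v \<xi>))) + t^2 * Qq \<sigma> v"
    using i1 i3 unfolding Qq_def by simp
  also have "(LINT \<xi>|lborel. Re (complex_of_real (p1 \<sigma> \<xi>) * FT u \<xi> * cnj (FT v \<xi>))) = Re (LINT \<xi>|lborel. complex_of_real (p1 \<sigma> \<xi>) * FT u \<xi> * cnj (FT v \<xi>))"
    by (rule integral_Re[OF i2])
  finally show ?thesis .
qed



lemma pw_bounds:
  fixes a b K r :: real
  assumes a: "0 \<le> a" "a \<le> K" and b: "0 \<le> b" "b \<le> K" and r: "\<bar>r\<bar> \<le> a * b"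
  shows "a^2 * a^2 \<le> K^2 * (a^2 + b^2)" "\<bar>a^2 * r\<bar> \<le> K^2 * (a^2 + b^2)" "r^2 \<le> K^2 * (a^2 + b^2)"
    "a^2 * b^2 \<le> K^2 * (a^2 + b^2)" "\<bar>r * b^2\<bar> \<le> K^2 * (a^2 + b^2)" "b^2 * b^2 \<le> K^2 * (a^2 + b^2)"
    "a^2 * (a * b) \<le> K^2 * (a^2 + b^2)"
proof -
  have aK: "a^2 \<le> K^2" using a by (intro power_mono) auto
  have bK: "b^2 \<le> K^2" using b by (intro power_mono) auto
  have aa: "a^2 \<le> a^2 + b^2" "b^2 \<le> a^2 + b^2" by auto
  have ab: "a * b \<le> a^2 + b^2" "0 \<le> a * b" using ab_le a b by auto
  show 1: "a^2 * a^2 \<le> K^2 * (a^2 + b^2)" by (rule prod_le_bound) (use aK aa in auto)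
  show 7: "a^2 * (a * b) \<le> K^2 * (a^2 + b^2)" by (rule prod_le_bound) (use aK ab in auto)
  have "\<bar>a^2 * r\<bar> \<le> a^2 * (a * b)" by (simp add: abs_mult mult_left_mono r)
  thus "\<bar>a^2 * r\<bar> \<le> K^2 * (a^2 + b^2)" using 7 by linarith
  have "\<bar>r\<bar>^2 \<le> (a * b)^2" by (rule power_mono[OF r]) simp
  hence "r^2 \<le> (a * b)^2" by simp
  also have "(a * b)^2 = b^2 * a^2" by (simp add: power_mult_distrib)
  also have "\<dots> \<le> K^2 * (a^2 + b^2)" by (rule prod_le_bound) (use bK aa in auto)
  finally show "r^2 \<le> K^2 * (a^2 + b^2)" .
  have 4: "b^2 * a^2 \<le> K^2 * (a^2 + b^2)" by (rule prod_le_bound) (use bK aa in auto)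
  thus "a^2 * b^2 \<le> K^2 * (a^2 + b^2)" by (simp add: mult.commute)
  have 5: "b^2 * (a * b) \<le> K^2 * (a^2 + b^2)" by (rule prod_le_bound) (use bK ab in auto)
  have "\<bar>r\<bar> * b^2 \<le> (a * b) * b^2" by (rule mult_right_mono[OF r]) simp
  hence "\<bar>r * b^2\<bar> \<le> b^2 * (a * b)" by (simp add: abs_mult mult.commute)
  thus "\<bar>r * b^2\<bar> \<le> K^2 * (a^2 + b^2)" using 5 by linarith
  show "b^2 * b^2 \<le> K^2 * (a^2 + b^2)" by (rule prod_le_bound) (use bK aa in auto)
qed

lemma quart: "((P::real) + 2*t*R + t^2*S)^2 = P*P + 4*t*(P*R) + t^2*(4*R^2 + 2*(P*S)) + t^3*(4*(R*S)) + t^4*(S*S)"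
  by algebra

lemma Re_cnj_le: "\<bar>Re (a * cnj b)\<bar> \<le> cmod a * cmod b"
  using abs_Re_le_cmod[of "a * cnj b"] by (simp add: norm_mult)

lemma lin6:
  fixes f0 f1 f2 f3 f4 f5 :: "real \<Rightarrow> real"
  assumes "integrable lborel f0" "integrable lborel f1" "integrable lborel f2" "integrable lborel f3"
    "integrable lborel f4" "integrable lborel f5"
  shows "(LINT x|lborel. f0 x + a * f1 x + b * (c * f2 x + d * f3 x) + e * (k * f4 x) + m * f5 x)
    = (LINT x|lborel. f0 x) + a * (LINT x|lborel. f1 x) + b * (c * (LINT x|lborel. f2 x) + d * (LINT x|lborel. f3 x))
      + e * (k * (LINT x|lborel. f4 x)) + m * (LINT x|lborel. f5 x)"
proof -
  note I = integrable_mult_right Bochner_Integration.integrable_add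
  have j1: "integrable lborel (\<lambda>x. a * f1 x)" "integrable lborel (\<lambda>x. m * f5 x)"
    "integrable lborel (\<lambda>x. e * (k * f4 x))" using assms by (auto intro!: I)
  have j2: "integrable lborel (\<lambda>x. b * (c * f2 x + d * f3 x))" using assms by (auto intro!: I)
  have j3: "integrable lborel (\<lambda>x. c * f2 x)" "integrable lborel (\<lambda>x. d * f3 x)" using assms by (auto intro!: I)
  have j4: "integrable lborel (\<lambda>x. f0 x + a * f1 x)" using assms j1 by (auto intro!: I)
  have j5: "integrable lborel (\<lambda>x. f0 x + a * f1 x + b * (c * f2 x + d * f3 x))" using j4 j2 by (rule Bochner_Integration.integrable_add)
  have j6: "integrable lborel (\<lambda>x. f0 x + a * f1 x + b * (c * f2 x + d * f3 x) + e * (k * f4 x))" using j5 j1 by (auto intro!: I)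
  have "(LINT x|lborel. f0 x + a * f1 x + b * (c * f2 x + d * f3 x) + e * (k * f4 x) + m * f5 x)
      = (LINT x|lborel. f0 x + a * f1 x + b * (c * f2 x + d * f3 x) + e * (k * f4 x)) + (LINT x|lborel. m * f5 x)"
    by (rule Bochner_Integration.integral_add[OF j6 j1(2)])
  also have "(LINT x|lborel. f0 x + a * f1 x + b * (c * f2 x + d * f3 x) + e * (k * f4 x))
      = (LINT x|lborel. f0 x + a * f1 x + b * (c * f2 x + d * f3 x)) + (LINT x|lborel. e * (k * f4 x))"
    by (rule Bochner_Integration.integral_add[OF j5 j1(3)])
  also have "(LINT x|lborel. f0 x + a * f1 x + b * (c * f2 x + d * f3 x))
      = (LINT x|lborel. f0 x + a * f1 x) + (LINT x|lborel. b * (c * f2 x + d * f3 x))"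
    by (rule Bochner_Integration.integral_add[OF j4 j2])
  also have "(LINT x|lborel. f0 x + a * f1 x) = (LINT x|lborel. f0 x) + (LINT x|lborel. a * f1 x)"
    by (rule Bochner_Integration.integral_add[OF assms(1) j1(1)])
  also have "(LINT x|lborel. b * (c * f2 x + d * f3 x)) = b * (LINT x|lborel. c * f2 x + d * f3 x)" by simp
  also have "(LINT x|lborel. c * f2 x + d * f3 x) = (LINT x|lborel. c * f2 x) + (LINT x|lborel. d * f3 x)"
    by (rule Bochner_Integration.integral_add[OF j3])
  finally show ?thesis by simp
qed

lemma L4_exp:
  assumes su: "sq_int u" and sp: "sq_int \<phi>"
    and Ku: "AE x in lborel. cmod (u x) \<le> K" and Kp: "AE x in lborel. cmod (\<phi> x) \<le> K"
  shows "integrable lborel (\<lambda>x. complex_of_real ((cmod (u x))^2) * u x * cnj (\<phi> x))"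
    and "integrable lborel (\<lambda>x. (cmod (u x))^4)"
    and "\<exists>c2 c3 c4. \<forall>t. L4pow4 (\<lambda>x. u x + complex_of_real t * \<phi> x) = L4pow4 u
        + 4 * t * Re (LINT x|lborel. complex_of_real ((cmod (u x))^2) * u x * cnj (\<phi> x)) + t^2 * c2 + t^3 * c3 + t^4 * c4"
proof -
  have [measurable]: "u \<in> borel_measurable lborel" "\<phi> \<in> borel_measurable lborel"
    using su sp by (auto simp: sq_int_def)
  define g where "g x = K^2 * ((cmod (u x))^2 + (cmod (\<phi> x))^2)" for x
  have gi: "integrable lborel g" unfolding g_def
    using su sp by (intro integrable_mult_right Bochner_Integration.integrable_add) (auto simp: sq_int_def)
  have gm[measurable]: "g \<in> borel_measurable lborel" using gi by auto
  have bnds: "AE x in lborel. (cmod (u x))^2 * (cmod (u x))^2 \<le> g x \<and>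
      \<bar>(cmod (u x))^2 * Re (u x * cnj (\<phi> x))\<bar> \<le> g x \<and> (Re (u x * cnj (\<phi> x)))^2 \<le> g x \<and>
      (cmod (u x))^2 * (cmod (\<phi> x))^2 \<le> g x \<and> \<bar>Re (u x * cnj (\<phi> x)) * (cmod (\<phi> x))^2\<bar> \<le> g x \<and>
      (cmod (\<phi> x))^2 * (cmod (\<phi> x))^2 \<le> g x \<and> (cmod (u x))^2 * (cmod (u x) * cmod (\<phi> x)) \<le> g x"
    using Ku Kp
  proof eventually_elim
    case (elim x)
    note pw = pw_bounds[OF norm_ge_zero elim(1) norm_ge_zero elim(2) Re_cnj_le[of "u x" "\<phi> x"]]
    show ?case unfolding g_def using pw by auto
  qed
  have int: "integrable lborel h" if "h \<in> borel_measurable lborel" "AE x in lborel. \<bar>h x\<bar> \<le> g x" for h :: "real \<Rightarrow> real"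
  proof (rule Bochner_Integration.integrable_bound[OF gi that(1)])
    show "AE x in lborel. norm (h x) \<le> norm (g x)" using that(2) by eventually_elim auto
  qed
  have i0: "integrable lborel (\<lambda>x. (cmod (u x))^2 * (cmod (u x))^2)"
    by (rule int) (measurable, use bnds in \<open>eventually_elim, auto\<close>)
  have i1: "integrable lborel (\<lambda>x. (cmod (u x))^2 * Re (u x * cnj (\<phi> x)))"
    by (rule int) (measurable, use bnds in \<open>eventually_elim, auto\<close>)
  have i2: "integrable lborel (\<lambda>x. (Re (u x * cnj (\<phi> x)))^2)"
    by (rule int) (measurable, use bnds in \<open>eventually_elim, auto\<close>)
  have i3: "integrable lborel (\<lambda>x. (cmod (u x))^2 * (cmod (\<phi> x))^2)"
    by (rule int) (measurable, use bnds in \<open>eventually_elim, auto\<close>)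
  have i4: "integrable lborel (\<lambda>x. Re (u x * cnj (\<phi> x)) * (cmod (\<phi> x))^2)"
    by (rule int) (measurable, use bnds in \<open>eventually_elim, auto\<close>)
  have i5: "integrable lborel (\<lambda>x. (cmod (\<phi> x))^2 * (cmod (\<phi> x))^2)"
    by (rule int) (measurable, use bnds in \<open>eventually_elim, auto\<close>)
  show iw: "integrable lborel (\<lambda>x. complex_of_real ((cmod (u x))^2) * u x * cnj (\<phi> x))"
  proof (rule Bochner_Integration.integrable_bound[OF gi])
    show "AE x in lborel. norm (complex_of_real ((cmod (u x))^2) * u x * cnj (\<phi> x)) \<le> norm (g x)"
      using bnds
    proof eventually_elim
      case (elim x)
      have "norm (complex_of_real ((cmod (u x))^2) * u x * cnj (\<phi> x)) = (cmod (u x))^2 * (cmod (u x) * cmod (\<phi> x))"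
        by (simp add: norm_mult norm_power mult.assoc)
      moreover have "(cmod (u x))^2 * (cmod (u x) * cmod (\<phi> x)) \<le> g x" using elim by blast
      ultimately show ?case by simp
    qed
  qed measurable
  have c4: "(y::real)^4 = y^2 * y^2" for y by (subst power_add[symmetric]) simp
  have c4': "(y::real)^4 = (y^2)^2" for y by (subst power_mult[symmetric]) simp
  show "integrable lborel (\<lambda>x. (cmod (u x))^4)" unfolding c4 by (rule i0)
  have reL: "Re (LINT x|lborel. complex_of_real ((cmod (u x))^2) * u x * cnj (\<phi> x)) = (LINT x|lborel. (cmod (u x))^2 * Re (u x * cnj (\<phi> x)))"
  proof -
    have "Re (LINT x|lborel. complex_of_real ((cmod (u x))^2) * u x * cnj (\<phi> x)) = (LINT x|lborel. Re (complex_of_real ((cmod (u x))^2) * u x * cnj (\<phi> x)))"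
      by (rule integral_Re[OF iw, symmetric])
    also have "\<dots> = (LINT x|lborel. (cmod (u x))^2 * Re (u x * cnj (\<phi> x)))"
      by (intro Bochner_Integration.integral_cong refl) (simp add: mult.assoc)
    finally show ?thesis .
  qed
  define I0 where "I0 = (LINT x|lborel. (cmod (u x))^2 * (cmod (u x))^2)"
  define I1 where "I1 = (LINT x|lborel. (cmod (u x))^2 * Re (u x * cnj (\<phi> x)))"
  define I2 where "I2 = (LINT x|lborel. (Re (u x * cnj (\<phi> x)))^2)"
  define I3 where "I3 = (LINT x|lborel. (cmod (u x))^2 * (cmod (\<phi> x))^2)"
  define I4 where "I4 = (LINT x|lborel. Re (u x * cnj (\<phi> x)) * (cmod (\<phi> x))^2)"
  define I5 where "I5 = (LINT x|lborel. (cmod (\<phi> x))^2 * (cmod (\<phi> x))^2)"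
  have L0: "L4pow4 u = I0" unfolding L4pow4_def I0_def c4 ..
  have "L4pow4 (\<lambda>x. u x + complex_of_real t * \<phi> x) = I0 + 4 * t * I1 + t^2 * (4 * I2 + 2 * I3) + t^3 * (4 * I4) + t^4 * I5" for t
  proof -
    have "L4pow4 (\<lambda>x. u x + complex_of_real t * \<phi> x) = (LINT x|lborel.
        (cmod (u x))^2 * (cmod (u x))^2 + 4 * t * ((cmod (u x))^2 * Re (u x * cnj (\<phi> x)))
        + t^2 * (4 * (Re (u x * cnj (\<phi> x)))^2 + 2 * ((cmod (u x))^2 * (cmod (\<phi> x))^2))
        + t^3 * (4 * (Re (u x * cnj (\<phi> x)) * (cmod (\<phi> x))^2)) + t^4 * ((cmod (\<phi> x))^2 * (cmod (\<phi> x))^2))"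
      unfolding L4pow4_def
    proof (intro Bochner_Integration.integral_cong refl)
      fix x
      have "(cmod (u x + complex_of_real t * \<phi> x))^4 = ((cmod (u x + complex_of_real t * \<phi> x))^2)^2"
        by (rule c4')
      also have "\<dots> = ((cmod (u x))^2 + 2 * t * Re (u x * cnj (\<phi> x)) + t^2 * (cmod (\<phi> x))^2)^2"
        by (simp only: cmod_sq_add)
      also note quart[of "(cmod (u x))^2" t "Re (u x * cnj (\<phi> x))" "(cmod (\<phi> x))^2"]
      finally show "(cmod (u x + complex_of_real t * \<phi> x))^4 = (cmod (u x))^2 * (cmod (u x))^2 + 4 * t * ((cmod (u x))^2 * Re (u x * cnj (\<phi> x)))
        + t^2 * (4 * (Re (u x * cnj (\<phi> x)))^2 + 2 * ((cmod (u x))^2 * (cmod (\<phi> x))^2))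
        + t^3 * (4 * (Re (u x * cnj (\<phi> x)) * (cmod (\<phi> x))^2)) + t^4 * ((cmod (\<phi> x))^2 * (cmod (\<phi> x))^2)" .
    qed
    also have "\<dots> = I0 + 4 * t * I1 + t^2 * (4 * I2 + 2 * I3) + t^3 * (4 * I4) + t^4 * I5"
      unfolding I0_def I1_def I2_def I3_def I4_def I5_def by (rule lin6[OF i0 i1 i2 i3 i4 i5])
    finally show ?thesis .
  qed
  thus "\<exists>c2 c3 c4. \<forall>t. L4pow4 (\<lambda>x. u x + complex_of_real t * \<phi> x) = L4pow4 u
        + 4 * t * Re (LINT x|lborel. complex_of_real ((cmod (u x))^2) * u x * cnj (\<phi> x)) + t^2 * c2 + t^3 * c3 + t^4 * c4"
    unfolding reL L0 I1_def[symmetric] by (intro exI[of _ "4 * I2 + 2 * I3"] exI[of _ "4 * I4"] exI[of _ I5]) auto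
qed



lemma Aq_zero:
  assumes [measurable]: "f \<in> borel_measurable lborel" and "AE x in lborel. f x = 0"
  shows "Aq f = 0"
  unfolding Aq_def by (rule integral_eq_zero_AE) (use assms(2) in eventually_elim, simp)

lemma Qq_pos:
  assumes s: "1/2 < \<sigma>" "\<sigma> < 1" and H: "Hs \<sigma> f" and A: "Aq f > 0"
  shows "Qq \<sigma> f > 0"
proof -
  note hf = Hs_FT[OF H]
  have [measurable]: "FT f \<in> borel_measurable lborel" "f \<in> borel_measurable lborel"
    using hf by (auto simp: is_FT_def sq_int_def)
  have nn: "\<And>\<xi>. 0 \<le> p1 \<sigma> \<xi> * (cmod (FT f \<xi>))^2" using p1_nonneg[OF s(1)] by simp
  have "Qq \<sigma> f \<ge> 0" unfolding Qq_def by (rule integral_nonneg_AE) (use nn in auto)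
  moreover have "Qq \<sigma> f \<noteq> 0"
  proof
    assume "Qq \<sigma> f = 0"
    hence "AE \<xi> in lborel. p1 \<sigma> \<xi> * (cmod (FT f \<xi>))^2 = 0"
      unfolding Qq_def using p1_int1[OF s H] nn by (subst (asm) integral_nonneg_eq_0_iff_AE) auto
    hence "AE \<xi> in lborel. FT f \<xi> = 0"
      using AE_lborel_singleton[of 0]
    proof eventually_elim
      case (elim \<xi>)
      have "p1 \<sigma> \<xi> > 0" using p1_pos[OF s(1) elim(2)] .
      thus ?case using elim(1) by simp
    qed
    hence "AE x in lborel. f x = 0" by (rule FT_zero_imp[OF hf(1)])
    hence "Aq f = 0" by (rule Aq_zero[rotated]) measurable
    thus False using A by simp
  qed
  ultimately show ?thesis by simp
qed

lemma L4_pos: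
  assumes s: "1/2 < \<sigma>" and H: "Hs \<sigma> f" and A: "Aq f > 0"
  shows "L4pow4 f > 0"
proof -
  note hf = Hs_FT[OF H]
  have sf: "sq_int f" using hf by (simp add: is_FT_def)
  have [measurable]: "f \<in> borel_measurable lborel" using sf by (simp add: sq_int_def)
  obtain K where K: "AE x in lborel. cmod (f x) \<le> K" using Hs_bounded[OF s H] by blast
  have i4: "integrable lborel (\<lambda>x. (cmod (f x))^4)" by (rule L4_exp(2)[OF sf sf K K])
  have "L4pow4 f \<ge> 0" unfolding L4pow4_def by simp
  moreover have "L4pow4 f \<noteq> 0"
  proof
    assume "L4pow4 f = 0"
    hence "AE x in lborel. (cmod (f x))^4 = 0"
      unfolding L4pow4_def using i4 by (subst (asm) integral_nonneg_eq_0_iff_AE) auto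
    hence "AE x in lborel. f x = 0" by eventually_elim simp
    hence "Aq f = 0" by (rule Aq_zero[rotated]) measurable
    thus False using A by simp
  qed
  ultimately show ?thesis by simp
qed

lemma Aq_nonneg: "Aq f \<ge> 0" unfolding Aq_def by simp



definition l1f :: "real \<Rightarrow> real \<Rightarrow> real \<Rightarrow> real \<Rightarrow> real" where
  "l1f \<sigma> A Q L = (4 * \<sigma> - 1) / (2 * \<sigma>) * ln A + 1 / (2 * \<sigma>) * ln Q - ln L"
definition l2f :: "real \<Rightarrow> real \<Rightarrow> real \<Rightarrow> real \<Rightarrow> real" where
  "l2f \<sigma> A Q L = ln (alpha \<sigma>) + 3 / 2 * ln A + 1 / 2 * ln Q - ln L"
definition Phi :: "real \<Rightarrow> real \<Rightarrow> real \<Rightarrow> real \<Rightarrow> real \<Rightarrow> real" where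
  "Phi \<sigma> \<theta> A Q L = exp (l1f \<sigma> A Q L) + exp (l2f \<sigma> A Q L) - exp ((1 - \<theta>) * l1f \<sigma> A Q L + \<theta> * l2f \<sigma> A Q L)"

lemma alpha_pos: "1/2 < \<sigma> \<Longrightarrow> alpha \<sigma> > 0"
  unfolding alpha_def by (simp add: mult_pos_pos)

lemma sqrt_powr_exp: "A > 0 \<Longrightarrow> sqrt A powr e = exp (e / 2 * ln A)"
  by (simp add: powr_def ln_sqrt)

lemma W_real:
  assumes s: "1/2 < \<sigma>" and A: "A > 0" and Q: "Q > 0" and L: "L > 0"
  shows "sqrt A powr ((4 * \<sigma> - 1) / \<sigma>) * sqrt Q powr (1 / \<sigma>) / L = exp (l1f \<sigma> A Q L)"
    and "alpha \<sigma> * sqrt A ^ 3 * sqrt Q / L = exp (l2f \<sigma> A Q L)"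
proof -
  have "sqrt A powr ((4 * \<sigma> - 1) / \<sigma>) * sqrt Q powr (1 / \<sigma>) / L
      = exp (((4 * \<sigma> - 1) / \<sigma>) / 2 * ln A) * exp ((1 / \<sigma>) / 2 * ln Q) / exp (ln L)"
    using A Q L by (simp add: sqrt_powr_exp)
  also have "\<dots> = exp (l1f \<sigma> A Q L)" unfolding l1f_def by (simp add: exp_add exp_diff mult.commute)
  finally show "sqrt A powr ((4 * \<sigma> - 1) / \<sigma>) * sqrt Q powr (1 / \<sigma>) / L = exp (l1f \<sigma> A Q L)" .
  have a3: "sqrt A ^ 3 = exp (3 / 2 * ln A)"
    using sqrt_powr_exp[OF A, of 3] powr_realpow[of "sqrt A" 3] A by simp
  have q: "sqrt Q = exp (1 / 2 * ln Q)" using sqrt_powr_exp[OF Q, of 1] Q by simp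
  have "alpha \<sigma> * sqrt A ^ 3 * sqrt Q / L = exp (ln (alpha \<sigma>)) * exp (3 / 2 * ln A) * exp (1 / 2 * ln Q) / exp (ln L)"
    using alpha_pos[OF s] L by (simp add: a3 q)
  also have "\<dots> = exp (l2f \<sigma> A Q L)" unfolding l2f_def by (simp add: exp_add exp_diff)
  finally show "alpha \<sigma> * sqrt A ^ 3 * sqrt Q / L = exp (l2f \<sigma> A Q L)" .
qed

lemma Wfun_Phi:
  assumes s: "1/2 < \<sigma>" and A: "Aq f > 0" and Q: "Qq \<sigma> f > 0" and L: "L4pow4 f > 0"
  shows "Wfun \<sigma> \<theta> f = Phi \<sigma> \<theta> (Aq f) (Qq \<sigma> f) (L4pow4 f)"
proof -
  have w1: "W1 \<sigma> f = exp (l1f \<sigma> (Aq f) (Qq \<sigma> f) (L4pow4 f))"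
    unfolding W1_def L2norm_Aq P1half_Qq by (rule W_real(1)[OF s A Q L])
  have w2: "W2 \<sigma> f = exp (l2f \<sigma> (Aq f) (Qq \<sigma> f) (L4pow4 f))"
    unfolding W2_def L2norm_Aq P1half_Qq by (rule W_real(2)[OF s A Q L])
  have w3: "W3 \<sigma> \<theta> f = exp ((1 - \<theta>) * l1f \<sigma> (Aq f) (Qq \<sigma> f) (L4pow4 f) + \<theta> * l2f \<sigma> (Aq f) (Qq \<sigma> f) (L4pow4 f))"
    unfolding W3_def w1 w2 by (simp add: powr_def exp_add)
  show ?thesis unfolding Wfun_def Phi_def w1 w2 w3 ..
qed

lemma Phi_deriv:
  assumes A: "At 0 > 0" and Q: "Qt 0 > 0" and L: "Lt 0 > 0"
    and dA: "(At has_real_derivative a1) (at 0)" and dQ: "(Qt has_real_derivative q1) (at 0)"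
    and dL: "(Lt has_real_derivative l1) (at 0)"
  shows "((\<lambda>t. Phi \<sigma> \<theta> (At t) (Qt t) (Lt t)) has_real_derivative
     (exp (l1f \<sigma> (At 0) (Qt 0) (Lt 0)) * ((4 * \<sigma> - 1) / (2 * \<sigma>) * (a1 / At 0) + 1 / (2 * \<sigma>) * (q1 / Qt 0) - l1 / Lt 0)
     + exp (l2f \<sigma> (At 0) (Qt 0) (Lt 0)) * (3 / 2 * (a1 / At 0) + 1 / 2 * (q1 / Qt 0) - l1 / Lt 0)
     - exp ((1 - \<theta>) * l1f \<sigma> (At 0) (Qt 0) (Lt 0) + \<theta> * l2f \<sigma> (At 0) (Qt 0) (Lt 0)) *
        ((1 - \<theta>) * ((4 * \<sigma> - 1) / (2 * \<sigma>) * (a1 / At 0) + 1 / (2 * \<sigma>) * (q1 / Qt 0) - l1 / Lt 0)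
         + \<theta> * (3 / 2 * (a1 / At 0) + 1 / 2 * (q1 / Qt 0) - l1 / Lt 0)))) (at 0)"
proof -
  have lA: "((\<lambda>t. ln (At t)) has_real_derivative a1 / At 0) (at 0)"
    using DERIV_ln_divide[OF A] dA DERIV_chain2 by (metis divide_inverse_commute inverse_eq_divide mult.commute)
  have lQ: "((\<lambda>t. ln (Qt t)) has_real_derivative q1 / Qt 0) (at 0)"
    using DERIV_ln_divide[OF Q] dQ DERIV_chain2 by (metis divide_inverse_commute inverse_eq_divide mult.commute)
  have lL: "((\<lambda>t. ln (Lt t)) has_real_derivative l1 / Lt 0) (at 0)"
    using DERIV_ln_divide[OF L] dL DERIV_chain2 by (metis divide_inverse_commute inverse_eq_divide mult.commute)
  have d1: "((\<lambda>t. l1f \<sigma> (At t) (Qt t) (Lt t)) has_real_derivative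
      (4 * \<sigma> - 1) / (2 * \<sigma>) * (a1 / At 0) + 1 / (2 * \<sigma>) * (q1 / Qt 0) - l1 / Lt 0) (at 0)"
    unfolding l1f_def by (intro DERIV_diff DERIV_add DERIV_cmult lA lQ lL)
  have d2: "((\<lambda>t. l2f \<sigma> (At t) (Qt t) (Lt t)) has_real_derivative
      3 / 2 * (a1 / At 0) + 1 / 2 * (q1 / Qt 0) - l1 / Lt 0) (at 0)"
  proof -
    have "((\<lambda>t. ln (alpha \<sigma>) + 3 / 2 * ln (At t) + 1 / 2 * ln (Qt t) - ln (Lt t)) has_real_derivative
      0 + 3 / 2 * (a1 / At 0) + 1 / 2 * (q1 / Qt 0) - l1 / Lt 0) (at 0)"
      by (intro DERIV_diff DERIV_add DERIV_cmult lA lQ lL DERIV_const)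
    thus ?thesis unfolding l2f_def by simp
  qed
  show ?thesis unfolding Phi_def
    by (intro DERIV_diff DERIV_add DERIV_fun_exp d1 d2 DERIV_cmult)
qed



lemma lin_h1: "(a::real) < y \<Longrightarrow> b \<le> a \<Longrightarrow> 0 < y - b" by linarith
lemma lin_h2: "(y::real) \<le> a \<Longrightarrow> a \<le> b \<Longrightarrow> 0 \<le> b - y" by linarith

lemma gen_pos:
  fixes X1 X2 X3 c0 h \<theta> :: real
  assumes "0 < \<theta>" "\<theta> < 1" "X1 > 0" "X2 > 0" "X3 \<le> (1 - \<theta>) * X1 + \<theta> * X2"
    and p: "c0 - ((1 - \<theta>) * c0 + \<theta> * h) * (1 - \<theta>) > 0"
    and q: "h - ((1 - \<theta>) * c0 + \<theta> * h) * \<theta> \<ge> 0"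
    and c: "(1 - \<theta>) * c0 + \<theta> * h \<ge> 0"
  shows "X1 * c0 + X2 * h - X3 * ((1 - \<theta>) * c0 + \<theta> * h) > 0"
proof -
  define c where "c = (1 - \<theta>) * c0 + \<theta> * h"
  have id: "X1 * c0 + X2 * h - X3 * c = X1 * (c0 - c * (1 - \<theta>)) + X2 * (h - c * \<theta>) + c * ((1 - \<theta>) * X1 + \<theta> * X2 - X3)"
    unfolding c_def by algebra
  have "X1 * (c0 - c * (1 - \<theta>)) > 0" using assms p unfolding c_def by simp
  moreover have "X2 * (h - c * \<theta>) \<ge> 0" using assms q unfolding c_def by simp
  moreover have "c * ((1 - \<theta>) * X1 + \<theta> * X2 - X3) \<ge> 0" using assms c unfolding c_def by simp
  ultimately show ?thesis using id unfolding c_def by linarith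
qed

lemma coef_pos:
  fixes X1 X2 X3 \<sigma> \<theta> :: real
  assumes s: "1/2 < \<sigma>" "\<sigma> < 1" and t: "0 < \<theta>" "\<theta> < 1" and X: "X1 > 0" "X2 > 0" "X3 \<le> (1 - \<theta>) * X1 + \<theta> * X2"
  shows "X1 * ((4 * \<sigma> - 1) / (2 * \<sigma>)) + X2 * (3 / 2) - X3 * ((1 - \<theta>) * ((4 * \<sigma> - 1) / (2 * \<sigma>)) + \<theta> * (3 / 2)) > 0"
    and "X1 * (1 / (2 * \<sigma>)) + X2 * (1 / 2) - X3 * ((1 - \<theta>) * (1 / (2 * \<sigma>)) + \<theta> * (1 / 2)) > 0"
    and "X1 + X2 - X3 > 0"
proof -
  define c0 where "c0 = 1 / (2 * \<sigma>)"
  have c0: "1/2 < c0" "c0 < 1" unfolding c0_def using s by (auto simp: field_simps)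
  have k: "(4 * \<sigma> - 1) / (2 * \<sigma>) = 2 - c0" unfolding c0_def using s by (simp add: field_simps)
  show "X1 * (1 / (2 * \<sigma>)) + X2 * (1 / 2) - X3 * ((1 - \<theta>) * (1 / (2 * \<sigma>)) + \<theta> * (1 / 2)) > 0"
    unfolding c0_def[symmetric]
  proof (rule gen_pos[OF t X])
    have e: "c0 - ((1 - \<theta>) * c0 + \<theta> * (1/2)) * (1 - \<theta>) = \<theta> * (c0 * (2 - \<theta>) - (1 - \<theta>) / 2)" by algebra
    have "c0 * (2 - \<theta>) > 1/2 * (2 - \<theta>)" using c0 t by (intro mult_strict_right_mono) auto
    hence i: "c0 * (2 - \<theta>) - (1 - \<theta>) / 2 > 0" by (rule lin_h1) (use t in simp)
    show "c0 - ((1 - \<theta>) * c0 + \<theta> * (1/2)) * (1 - \<theta>) > 0" unfolding e using t(1) i by (rule mult_pos_pos)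
    have e2: "1/2 - ((1 - \<theta>) * c0 + \<theta> * (1/2)) * \<theta> = (1 - \<theta>) * ((1 + \<theta>) / 2 - \<theta> * c0)" by algebra
    have "\<theta> * c0 \<le> \<theta> * 1" using c0 t by (intro mult_left_mono) auto
    hence i2: "(1 + \<theta>) / 2 - \<theta> * c0 \<ge> 0" by (rule lin_h2) (use t in simp)
    show "1/2 - ((1 - \<theta>) * c0 + \<theta> * (1/2)) * \<theta> \<ge> 0" unfolding e2 using t i2 by simp
    show "(1 - \<theta>) * c0 + \<theta> * (1/2) \<ge> 0" using t c0 by simp
  qed
  show "X1 * ((4 * \<sigma> - 1) / (2 * \<sigma>)) + X2 * (3 / 2) - X3 * ((1 - \<theta>) * ((4 * \<sigma> - 1) / (2 * \<sigma>)) + \<theta> * (3 / 2)) > 0"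
    unfolding k
  proof (rule gen_pos[OF t X])
    have e: "(2 - c0) - ((1 - \<theta>) * (2 - c0) + \<theta> * (3/2)) * (1 - \<theta>) = \<theta> * ((2 - c0) * (2 - \<theta>) - 3/2 * (1 - \<theta>))" by algebra
    have "(2 - c0) * (2 - \<theta>) > 1 * (2 - \<theta>)" using c0 t by (intro mult_strict_right_mono) auto
    hence i: "(2 - c0) * (2 - \<theta>) - 3/2 * (1 - \<theta>) > 0" by (rule lin_h1) (use t in simp)
    show "(2 - c0) - ((1 - \<theta>) * (2 - c0) + \<theta> * (3/2)) * (1 - \<theta>) > 0" unfolding e using t(1) i by (rule mult_pos_pos)
    have e2: "3/2 - ((1 - \<theta>) * (2 - c0) + \<theta> * (3/2)) * \<theta> = (1 - \<theta>) * (3 * (1 + \<theta>) / 2 - \<theta> * (2 - c0))" by algebra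
    have "\<theta> * (2 - c0) \<le> \<theta> * (3/2)" using c0 t by (intro mult_left_mono) auto
    hence i2: "3 * (1 + \<theta>) / 2 - \<theta> * (2 - c0) \<ge> 0" by (rule lin_h2) (use t in simp)
    show "3/2 - ((1 - \<theta>) * (2 - c0) + \<theta> * (3/2)) * \<theta> \<ge> 0" unfolding e2 using t i2 by simp
    show "(1 - \<theta>) * (2 - c0) + \<theta> * (3/2) \<ge> 0" using t c0 by simp
  qed
  have "(1 - \<theta>) * X1 + \<theta> * X2 < X1 + X2" using X t by (smt (verit) mult_le_cancel_right1 mult_less_cancel_right2)
  thus "X1 + X2 - X3 > 0" using X by linarith
qed

lemma EL:
  assumes s: "1/2 < \<sigma>" "\<sigma> < 1" and u: "Hs \<sigma> u" and Apos: "Aq u > 0"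
    and mini: "\<forall>v. Hs \<sigma> v \<and> L2norm v > 0 \<longrightarrow> Wfun \<sigma> \<theta> u \<le> Wfun \<sigma> \<theta> v"
    and ph: "Hs \<sigma> \<phi>"
  shows "exp (l1f \<sigma> (Aq u) (Qq \<sigma> u) (L4pow4 u)) *
         ((4 * \<sigma> - 1) / (2 * \<sigma>) * (2 * Re (LINT x|lborel. u x * cnj (\<phi> x)) / Aq u)
          + 1 / (2 * \<sigma>) * (2 * Re (LINT \<xi>|lborel. complex_of_real (p1 \<sigma> \<xi>) * FT u \<xi> * cnj (FT \<phi> \<xi>)) / Qq \<sigma> u)
          - 4 * Re (LINT x|lborel. complex_of_real ((cmod (u x))^2) * u x * cnj (\<phi> x)) / L4pow4 u)
       + exp (l2f \<sigma> (Aq u) (Qq \<sigma> u) (L4pow4 u)) *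
         (3 / 2 * (2 * Re (LINT x|lborel. u x * cnj (\<phi> x)) / Aq u)
          + 1 / 2 * (2 * Re (LINT \<xi>|lborel. complex_of_real (p1 \<sigma> \<xi>) * FT u \<xi> * cnj (FT \<phi> \<xi>)) / Qq \<sigma> u)
          - 4 * Re (LINT x|lborel. complex_of_real ((cmod (u x))^2) * u x * cnj (\<phi> x)) / L4pow4 u)
       - exp ((1 - \<theta>) * l1f \<sigma> (Aq u) (Qq \<sigma> u) (L4pow4 u) + \<theta> * l2f \<sigma> (Aq u) (Qq \<sigma> u) (L4pow4 u)) *
         ((1 - \<theta>) * ((4 * \<sigma> - 1) / (2 * \<sigma>) * (2 * Re (LINT x|lborel. u x * cnj (\<phi> x)) / Aq u)
          + 1 / (2 * \<sigma>) * (2 * Re (LINT \<xi>|lborel. complex_of_real (p1 \<sigma> \<xi>) * FT u \<xi> * cnj (FT \<phi> \<xi>)) / Qq \<sigma> u)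
          - 4 * Re (LINT x|lborel. complex_of_real ((cmod (u x))^2) * u x * cnj (\<phi> x)) / L4pow4 u)
          + \<theta> * (3 / 2 * (2 * Re (LINT x|lborel. u x * cnj (\<phi> x)) / Aq u)
          + 1 / 2 * (2 * Re (LINT \<xi>|lborel. complex_of_real (p1 \<sigma> \<xi>) * FT u \<xi> * cnj (FT \<phi> \<xi>)) / Qq \<sigma> u)
          - 4 * Re (LINT x|lborel. complex_of_real ((cmod (u x))^2) * u x * cnj (\<phi> x)) / L4pow4 u))
       = 0"
proof -
  define A where "A = Aq u"
  define Q where "Q = Qq \<sigma> u"
  define L where "L = L4pow4 u"
  define ra where "ra = Re (LINT x|lborel. u x * cnj (\<phi> x))"
  define rq where "rq = Re (LINT \<xi>|lborel. complex_of_real (p1 \<sigma> \<xi>) * FT u \<xi> * cnj (FT \<phi> \<xi>))"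
  define rl where "rl = Re (LINT x|lborel. complex_of_real ((cmod (u x))^2) * u x * cnj (\<phi> x))"
  have su: "sq_int u" using Hs_FT(1)[OF u] by (simp add: is_FT_def)
  have sp: "sq_int \<phi>" using Hs_FT(1)[OF ph] by (simp add: is_FT_def)
  obtain K1 where K1: "AE x in lborel. cmod (u x) \<le> K1" using Hs_bounded[OF s(1) u] by blast
  obtain K2 where K2: "AE x in lborel. cmod (\<phi> x) \<le> K2" using Hs_bounded[OF s(1) ph] by blast
  have Ku: "AE x in lborel. cmod (u x) \<le> max K1 K2" using K1 by eventually_elim auto
  have Kp: "AE x in lborel. cmod (\<phi> x) \<le> max K1 K2" using K2 by eventually_elim auto
  obtain c2 c3 c4 where Lexp: "\<And>t. L4pow4 (\<lambda>x. u x + complex_of_real t * \<phi> x) = L + 4 * t * rl + t^2 * c2 + t^3 * c3 + t^4 * c4"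
    using L4_exp(3)[OF su sp Ku Kp] unfolding L_def rl_def by blast
  define At where "At t = A + 2 * t * ra + t^2 * Aq \<phi>" for t
  define Qt where "Qt t = Q + 2 * t * rq + t^2 * Qq \<sigma> \<phi>" for t
  define Lt where "Lt t = L + 4 * t * rl + t^2 * c2 + t^3 * c3 + t^4 * c4" for t
  have eA: "Aq (\<lambda>x. u x + complex_of_real t * \<phi> x) = At t" for t
    unfolding At_def A_def ra_def by (rule Aq_exp[OF su sp])
  have eQ: "Qq \<sigma> (\<lambda>x. u x + complex_of_real t * \<phi> x) = Qt t" for t
    unfolding Qt_def Q_def rq_def by (rule Qq_exp[OF s u ph])
  have eL: "L4pow4 (\<lambda>x. u x + complex_of_real t * \<phi> x) = Lt t" for t
    unfolding Lt_def by (rule Lexp)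
  have A0: "At 0 = A" "Qt 0 = Q" "Lt 0 = L" by (simp_all add: At_def Qt_def Lt_def)
  have Ap: "A > 0" using Apos A_def by simp
  have Qp: "Q > 0" unfolding Q_def by (rule Qq_pos[OF s u Apos])
  have Lp: "L > 0" unfolding L_def by (rule L4_pos[OF s(1) u Apos])
  have dA: "(At has_real_derivative 2 * ra) (at 0)"
    unfolding At_def[abs_def] by (auto intro!: derivative_eq_intros)
  have dQ: "(Qt has_real_derivative 2 * rq) (at 0)"
    unfolding Qt_def[abs_def] by (auto intro!: derivative_eq_intros)
  have dL: "(Lt has_real_derivative 4 * rl) (at 0)"
    unfolding Lt_def[abs_def] by (auto intro!: derivative_eq_intros)
  note D = Phi_deriv[of At Qt Lt "2 * ra" "2 * rq" "4 * rl" \<sigma> \<theta>, unfolded A0, OF Ap Qp Lp dA[unfolded] dQ dL, unfolded A0]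
  define d where "d = A / (2 * \<bar>ra\<bar> + 1)"
  have dpos: "d > 0" unfolding d_def using Ap by (simp add: add_nonneg_pos)
  have "\<forall>y. \<bar>0 - y\<bar> < d \<longrightarrow> Phi \<sigma> \<theta> (At 0) (Qt 0) (Lt 0) \<le> Phi \<sigma> \<theta> (At y) (Qt y) (Lt y)"
  proof (intro allI impI)
    fix y assume y: "\<bar>0 - y\<bar> < d"
    have "\<bar>y\<bar> * (2 * \<bar>ra\<bar> + 1) < d * (2 * \<bar>ra\<bar> + 1)"
      using y by (intro mult_strict_right_mono) auto
    hence "\<bar>y\<bar> * (2 * \<bar>ra\<bar> + 1) < A" unfolding d_def by (simp add: add_nonneg_pos)
    moreover have "\<bar>2 * y * ra\<bar> \<le> \<bar>y\<bar> * (2 * \<bar>ra\<bar> + 1)"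
      by (simp add: abs_mult algebra_simps mult_left_mono)
    moreover have "0 \<le> y^2 * Aq \<phi>" unfolding Aq_def by simp
    ultimately have Ay: "At y > 0" unfolding At_def by linarith
    note Hy = Hs_lin(1)[OF s(1) u ph, of "complex_of_real y"]
    have Ay': "Aq (\<lambda>x. u x + complex_of_real y * \<phi> x) > 0" using Ay eA by simp
    have "Wfun \<sigma> \<theta> u \<le> Wfun \<sigma> \<theta> (\<lambda>x. u x + complex_of_real y * \<phi> x)"
      using mini Hy Ay' by (simp add: L2norm_Aq)
    also have "Wfun \<sigma> \<theta> (\<lambda>x. u x + complex_of_real y * \<phi> x) = Phi \<sigma> \<theta> (At y) (Qt y) (Lt y)"
      using Wfun_Phi[OF s(1) Ay' Qq_pos[OF s Hy Ay'] L4_pos[OF s(1) Hy Ay']] eA eQ eL by simp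
    also have "Wfun \<sigma> \<theta> u = Phi \<sigma> \<theta> (At 0) (Qt 0) (Lt 0)"
      using Wfun_Phi[OF s(1) Apos] Qp Lp unfolding A0 A_def Q_def L_def by simp
    finally show "Phi \<sigma> \<theta> (At 0) (Qt 0) (Lt 0) \<le> Phi \<sigma> \<theta> (At y) (Qt y) (Lt y)" by simp
  qed
  hence "\<forall>y. \<bar>0 - y\<bar> < d \<longrightarrow> (\<lambda>t. Phi \<sigma> \<theta> (At t) (Qt t) (Lt t)) 0 \<le> (\<lambda>t. Phi \<sigma> \<theta> (At t) (Qt t) (Lt t)) y" by simp
  from DERIV_local_min[OF D dpos this] show ?thesis
    unfolding A_def[symmetric] Q_def[symmetric] L_def[symmetric] ra_def[symmetric] rq_def[symmetric] rl_def[symmetric]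
    by (simp add: mult.assoc)
qed



lemma int_scale_cnj: "(LINT x|lborel. g x * cnj (c * \<phi> x)) = cnj c * (LINT x|lborel. g x * cnj (\<phi> x))"
proof -
  have "(LINT x|lborel. g x * cnj (c * \<phi> x)) = (LINT x|lborel. cnj c * (g x * cnj (\<phi> x)))"
    by (intro Bochner_Integration.integral_cong refl) (simp add: mult_ac)
  thus ?thesis by simp
qed

lemma IP_scale_phi:
  assumes ph: "Hs \<sigma> \<phi>" and u: "Hs \<sigma> u"
  shows "(LINT \<xi>|lborel. complex_of_real (p1 \<sigma> \<xi>) * FT u \<xi> * cnj (FT (\<lambda>x. c * \<phi> x) \<xi>))
      = cnj c * (LINT \<xi>|lborel. complex_of_real (p1 \<sigma> \<xi>) * FT u \<xi> * cnj (FT \<phi> \<xi>))"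
proof -
  note H = Hs_scale[OF ph, of c]
  have [measurable]: "FT u \<in> borel_measurable lborel" "FT \<phi> \<in> borel_measurable lborel"
    "FT (\<lambda>x. c * \<phi> x) \<in> borel_measurable lborel"
    using Hs_FT(1)[OF u] Hs_FT(1)[OF ph] Hs_FT(1)[OF H(1)] by (auto simp: is_FT_def sq_int_def)
  have "(LINT \<xi>|lborel. complex_of_real (p1 \<sigma> \<xi>) * FT u \<xi> * cnj (FT (\<lambda>x. c * \<phi> x) \<xi>))
      = (LINT \<xi>|lborel. complex_of_real (p1 \<sigma> \<xi>) * FT u \<xi> * cnj (c * FT \<phi> \<xi>))"
  proof (rule Bochner_Integration.integral_cong_AE)
    show "AE \<xi> in lborel. complex_of_real (p1 \<sigma> \<xi>) * FT u \<xi> * cnj (FT (\<lambda>x. c * \<phi> x) \<xi>) = complex_of_real (p1 \<sigma> \<xi>) * FT u \<xi> * cnj (c * FT \<phi> \<xi>)"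
      using H(2) by eventually_elim simp
  qed (unfold p1_def, measurable)
  also have "\<dots> = cnj c * (LINT \<xi>|lborel. complex_of_real (p1 \<sigma> \<xi>) * FT u \<xi> * cnj (FT \<phi> \<xi>))"
    by (rule int_scale_cnj)
  finally show ?thesis .
qed

lemma IP_scale_u:
  assumes ph: "Hs \<sigma> \<phi>" and u: "Hs \<sigma> u"
  shows "(LINT \<xi>|lborel. complex_of_real (p1 \<sigma> \<xi>) * FT (\<lambda>x. c * u x) \<xi> * cnj (FT \<phi> \<xi>))
      = c * (LINT \<xi>|lborel. complex_of_real (p1 \<sigma> \<xi>) * FT u \<xi> * cnj (FT \<phi> \<xi>))"
proof -
  note H = Hs_scale[OF u, of c]
  have [measurable]: "FT u \<in> borel_measurable lborel" "FT \<phi> \<in> borel_measurable lborel"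
    "FT (\<lambda>x. c * u x) \<in> borel_measurable lborel"
    using Hs_FT(1)[OF u] Hs_FT(1)[OF ph] Hs_FT(1)[OF H(1)] by (auto simp: is_FT_def sq_int_def)
  have "(LINT \<xi>|lborel. complex_of_real (p1 \<sigma> \<xi>) * FT (\<lambda>x. c * u x) \<xi> * cnj (FT \<phi> \<xi>))
      = (LINT \<xi>|lborel. c * (complex_of_real (p1 \<sigma> \<xi>) * FT u \<xi> * cnj (FT \<phi> \<xi>)))"
  proof (rule Bochner_Integration.integral_cong_AE)
    show "AE \<xi> in lborel. complex_of_real (p1 \<sigma> \<xi>) * FT (\<lambda>x. c * u x) \<xi> * cnj (FT \<phi> \<xi>) = c * (complex_of_real (p1 \<sigma> \<xi>) * FT u \<xi> * cnj (FT \<phi> \<xi>))"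
      using H(2) by eventually_elim (simp add: mult_ac)
  qed (unfold p1_def, measurable)
  thus ?thesis by simp
qed

theorem lemma2p2:
  fixes \<sigma> :: real
  assumes "1/2 < \<sigma>" and "\<sigma> < 1"
  shows "\<exists>\<theta>0. 0 < \<theta>0 \<and> \<theta>0 < 1 \<and>
    (\<forall>\<theta>. \<theta>0 < \<theta> \<and> \<theta> < 1 \<longrightarrow>
      (\<forall>u. Hs \<sigma> u \<and> L2norm u > 0 \<and>
           (\<forall>v. Hs \<sigma> v \<and> L2norm v > 0 \<longrightarrow> Wfun \<sigma> \<theta> u \<le> Wfun \<sigma> \<theta> v) \<longrightarrow>
        (\<exists>a b. a > 0 \<and> b > 0 \<and> weak_sol \<sigma> a b u \<and>
           (let \<omega> = a powr (1 / (2 * \<sigma>))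
            in weak_sol \<sigma> (\<omega> powr (2 * \<sigma>)) 1 (\<lambda>x. complex_of_real (sqrt b) * u x)))))"
proof (rule exI[of _ "1/2"], intro conjI allI impI)
  have s: "1/2 < \<sigma>" "\<sigma> < 1" using assms by auto
  fix \<theta> u
  assume th: "1/2 < \<theta> \<and> \<theta> < 1"
    and hu: "Hs \<sigma> u \<and> 0 < L2norm u \<and> (\<forall>v. Hs \<sigma> v \<and> 0 < L2norm v \<longrightarrow> Wfun \<sigma> \<theta> u \<le> Wfun \<sigma> \<theta> v)"
  have t: "0 < \<theta>" "\<theta> < 1" using th by auto
  have u: "Hs \<sigma> u" using hu by blast
  have mini: "\<forall>v. Hs \<sigma> v \<and> L2norm v > 0 \<longrightarrow> Wfun \<sigma> \<theta> u \<le> Wfun \<sigma> \<theta> v" using hu by blast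
  have Apos: "Aq u > 0" using hu by (simp add: L2norm_Aq)
  define A where "A = Aq u"
  define Q where "Q = Qq \<sigma> u"
  define L where "L = L4pow4 u"
  have Ap: "A > 0" using Apos A_def by simp
  have Qp: "Q > 0" unfolding Q_def by (rule Qq_pos[OF s u Apos])
  have Lp: "L > 0" unfolding L_def by (rule L4_pos[OF s(1) u Apos])
  define X1 where "X1 = exp (l1f \<sigma> A Q L)"
  define X2 where "X2 = exp (l2f \<sigma> A Q L)"
  define X3 where "X3 = exp ((1 - \<theta>) * l1f \<sigma> A Q L + \<theta> * l2f \<sigma> A Q L)"
  have X: "X1 > 0" "X2 > 0" unfolding X1_def X2_def by auto
  have X3e: "X3 = X1 powr (1 - \<theta>) * X2 powr \<theta>"
    unfolding X1_def X2_def X3_def by (simp add: powr_def exp_add)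
  have X3le: "X3 \<le> (1 - \<theta>) * X1 + \<theta> * X2"
    unfolding X3e by (rule Youngs_inequality_0) (use t X in auto)
  define k where "k = (4 * \<sigma> - 1) / (2 * \<sigma>)"
  define cA where "cA = X1 * k + X2 * (3 / 2) - X3 * ((1 - \<theta>) * k + \<theta> * (3 / 2))"
  define cP where "cP = X1 * (1 / (2 * \<sigma>)) + X2 * (1 / 2) - X3 * ((1 - \<theta>) * (1 / (2 * \<sigma>)) + \<theta> * (1 / 2))"
  define cW where "cW = X1 + X2 - X3"
  note cp = coef_pos[OF s t X X3le]
  have cAp: "cA > 0" using cp(1) unfolding cA_def k_def .
  have cPp: "cP > 0" using cp(2) unfolding cP_def .
  have cWp: "cW > 0" using cp(3) unfolding cW_def .
  define a where "a = cA * Q / (cP * A)"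
  define b where "b = 2 * cW * Q / (cP * L)"
  have ap: "a > 0" unfolding a_def using cAp Qp cPp Ap by simp
  have bp: "b > 0" unfolding b_def using cWp Qp cPp Lp by simp
  define IA where "IA \<phi> = (LINT x|lborel. u x * cnj (\<phi> x))" for \<phi>
  define IP where "IP \<phi> = (LINT \<xi>|lborel. complex_of_real (p1 \<sigma> \<xi>) * FT u \<xi> * cnj (FT \<phi> \<xi>))" for \<phi>
  define IL where "IL \<phi> = (LINT x|lborel. complex_of_real ((cmod (u x))^2) * u x * cnj (\<phi> x))" for \<phi>
  define E where "E \<phi> = IP \<phi> + complex_of_real a * IA \<phi> - complex_of_real b * IL \<phi>" for \<phi>
  have ReE: "Re (E \<phi>) = 0" if ph: "Hs \<sigma> \<phi>" for \<phi>
  proof -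
    have D: "X1 * (k * (2 * Re (IA \<phi>) / A) + 1 / (2 * \<sigma>) * (2 * Re (IP \<phi>) / Q) - 4 * Re (IL \<phi>) / L)
       + X2 * (3 / 2 * (2 * Re (IA \<phi>) / A) + 1 / 2 * (2 * Re (IP \<phi>) / Q) - 4 * Re (IL \<phi>) / L)
       - X3 * ((1 - \<theta>) * (k * (2 * Re (IA \<phi>) / A) + 1 / (2 * \<sigma>) * (2 * Re (IP \<phi>) / Q) - 4 * Re (IL \<phi>) / L)
          + \<theta> * (3 / 2 * (2 * Re (IA \<phi>) / A) + 1 / 2 * (2 * Re (IP \<phi>) / Q) - 4 * Re (IL \<phi>) / L)) = 0"
      using EL[OF s u Apos mini ph]
      unfolding X1_def X2_def X3_def A_def Q_def L_def IA_def IP_def IL_def k_def .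
    define x where "x = 2 * Re (IA \<phi>) / A"
    define y where "y = 2 * Re (IP \<phi>) / Q"
    define z where "z = 4 * Re (IL \<phi>) / L"
    have "X1 * (k * x + 1 / (2 * \<sigma>) * y - z) + X2 * (3 / 2 * x + 1 / 2 * y - z)
       - X3 * ((1 - \<theta>) * (k * x + 1 / (2 * \<sigma>) * y - z) + \<theta> * (3 / 2 * x + 1 / 2 * y - z)) = x * cA + y * cP - z * cW"
      unfolding cA_def cP_def cW_def by algebra
    hence lc: "x * cA + y * cP - z * cW = 0" using D unfolding x_def y_def z_def by simp
    have ex: "x * cA * (Q / (2 * cP)) = a * Re (IA \<phi>)" unfolding x_def a_def using Ap Qp cPp by (simp add: field_simps)
    have ey: "y * cP * (Q / (2 * cP)) = Re (IP \<phi>)" unfolding y_def using Ap Qp cPp by (simp add: field_simps)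
    have ez: "z * cW * (Q / (2 * cP)) = b * Re (IL \<phi>)" unfolding z_def b_def using Lp Qp cPp by (simp add: field_simps)
    have "(x * cA + y * cP - z * cW) * (Q / (2 * cP)) = 0" using lc by simp
    hence "x * cA * (Q / (2 * cP)) + y * cP * (Q / (2 * cP)) - z * cW * (Q / (2 * cP)) = 0" by (simp only: left_diff_distrib distrib_right)
    hence "Re (IP \<phi>) + a * Re (IA \<phi>) - b * Re (IL \<phi>) = 0" unfolding ex ey ez by simp
    thus ?thesis unfolding E_def by simp
  qed
  have Ezero: "E \<phi> = 0" if ph: "Hs \<sigma> \<phi>" for \<phi>
  proof -
    have ph': "Hs \<sigma> (\<lambda>x. \<i> * \<phi> x)" by (rule Hs_scale(1)[OF ph])
    have "E (\<lambda>x. \<i> * \<phi> x) = cnj \<i> * E \<phi>"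
      unfolding E_def IP_def IA_def IL_def IP_scale_phi[OF ph u] int_scale_cnj by (simp add: algebra_simps)
    hence "Im (E \<phi>) = 0" using ReE[OF ph'] by simp
    thus ?thesis using ReE[OF ph] by (simp add: complex_eq_iff)
  qed
    have w1: "weak_sol \<sigma> a b u" unfolding weak_sol_def
      using u Ezero unfolding E_def IP_def IA_def IL_def by blast
    have om: "(a powr (1 / (2 * \<sigma>))) powr (2 * \<sigma>) = a"
      using ap s by (simp add: powr_powr)
    define c where "c = sqrt b"
    have c2: "c^2 = b" unfolding c_def using bp by simp
    have w2: "let \<omega> = a powr (1 / (2 * \<sigma>)) in weak_sol \<sigma> (\<omega> powr (2 * \<sigma>)) 1 (\<lambda>x. complex_of_real (sqrt b) * u x)"
      unfolding Let_def om c_def[symmetric] weak_sol_def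
    proof (intro conjI allI impI)
      show "Hs \<sigma> (\<lambda>x. complex_of_real c * u x)" by (rule Hs_scale(1)[OF u])
      fix \<phi> assume ph: "Hs \<sigma> \<phi>"
      have e1: "(LINT x|lborel. complex_of_real c * u x * cnj (\<phi> x)) = complex_of_real c * IA \<phi>"
        unfolding IA_def by (simp add: mult.assoc)
      have e2: "(LINT x|lborel. complex_of_real ((cmod (complex_of_real c * u x))^2) * (complex_of_real c * u x) * cnj (\<phi> x))
          = complex_of_real c * complex_of_real b * IL \<phi>"
      proof -
        have "(LINT x|lborel. complex_of_real ((cmod (complex_of_real c * u x))^2) * (complex_of_real c * u x) * cnj (\<phi> x))
          = (LINT x|lborel. (complex_of_real c * complex_of_real b) * (complex_of_real ((cmod (u x))^2) * u x * cnj (\<phi> x)))"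
          by (intro Bochner_Integration.integral_cong refl) (simp add: norm_mult power_mult_distrib c2[symmetric] mult_ac)
        thus ?thesis unfolding IL_def by simp
      qed
      have "(LINT \<xi>|lborel. complex_of_real (p1 \<sigma> \<xi>) * FT (\<lambda>x. complex_of_real c * u x) \<xi> * cnj (FT \<phi> \<xi>))
          + complex_of_real a * (LINT x|lborel. complex_of_real c * u x * cnj (\<phi> x))
          - complex_of_real 1 * (LINT x|lborel. complex_of_real ((cmod (complex_of_real c * u x))^2) * (complex_of_real c * u x) * cnj (\<phi> x))
          = complex_of_real c * E \<phi>"
        unfolding IP_scale_u[OF ph u] e1 e2 E_def IP_def by (simp add: algebra_simps)
      also have "\<dots> = 0" using Ezero[OF ph] by simp
      finally show "(LINT \<xi>|lborel. complex_of_real (p1 \<sigma> \<xi>) * FT (\<lambda>x. complex_of_real c * u x) \<xi> * cnj (FT \<phi> \<xi>))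
          + complex_of_real a * (LINT x|lborel. complex_of_real c * u x * cnj (\<phi> x))
          - complex_of_real 1 * (LINT x|lborel. complex_of_real ((cmod (complex_of_real c * u x))^2) * (complex_of_real c * u x) * cnj (\<phi> x)) = 0" .
    qed
  show "\<exists>a b. a > 0 \<and> b > 0 \<and> weak_sol \<sigma> a b u \<and>
           (let \<omega> = a powr (1 / (2 * \<sigma>))
            in weak_sol \<sigma> (\<omega> powr (2 * \<sigma>)) 1 (\<lambda>x. complex_of_real (sqrt b) * u x))"
    using ap bp w1 w2 by blast
qed (simp_all)


end
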